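(* Let $\Theta$ be a weakly compact set of probability measures on $\mathbb{R}$ with $\lim_{N\to\infty}\sup_{\mu\in\Theta}\int|x|1_{\{|x|>N\}}d\mu=0$, and let $\mathcal{N}[\psi]=\max_{\mu\in\Theta}\mu[\psi]$ for $\psi\in C_{b,Lip}(\mathbb{R})$. Let $\varphi\in C_b^2(\mathbb{R})$ and $u(t,x):=\mathcal{N}[\varphi(x+\sqrt{t}\,\cdot)]$. Then for every $t>0$ and $x\in\mathbb{R}$ the one-sided derivatives below exist and \[\partial_t^+u(t,x)=\sup_{\mu\in\Theta_{t,x}}\int\frac{y}{2\sqrt t}\varphi'(x+\sqrt t y)\mu(dy),\qquad \partial_t^-u(t,x)=\inf_{\mu\in\Theta_{t,x}}\int\frac{y}{2\sqrt t}\varphi'(x+\sqrt t y)\mu(dy),\] \[\partial_x^+u(t,x)=\sup_{\mu\in\Theta_{t,x}}\int\varphi'(x+\sqrt t y)\mu(dy),\qquad \partial_x^-u(t,x)=\inf_{\mu\in\Theta_{t,x}}\int\varphi'(x+\sqrt t y)\mu(dy),\] where $\Theta_{t,x}=\{\mu\in\Theta:\mu[\varphi(x+\sqrt t\,\cdot)]=\mathcal{N}[\varphi(x+\sqrt t\,\cdot)]\}$. Furthermore, \[\partial_t^+u(t,x)=\lim_{\delta\downarrow0}\partial_t^+u(t+\delta,x)=\lim_{\delta\downarrow0}\partial_t^-u(t+\delta,x),\qquad \partial_t^-u(t,x)=\lim_{\delta\downarrow0}\partial_t^+u(t-\delta,x)=\lim_{\delta\downarrow0}\partial_t^-u(t-\delta,x),\]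 and similarly $\partial_x^+u(t,x)=\lim_{\delta\downarrow0}\partial_x^+u(t,x+\delta)=\lim_{\delta\downarrow0}\partial_x^-u(t,x+\delta)$ and $\partial_x^-u(t,x)=\lim_{\delta\downarrow0}\partial_x^+u(t,x-\delta)=\lim_{\delta\downarrow0}\partial_x^-u(t,x-\delta)$.
   Context: $C_{b,Lip}(\mathbb{R})$: bounded Lipschitz functions; $C_b^2(\mathbb{R})$: twice continuously differentiable functions bounded with bounded first and second derivatives; $\mu[\psi]=\int\psi\,d\mu$. One-sided derivatives: $\partial_t^+u(t,x)=\lim_{\delta\downarrow0}\frac{u(t+\delta,x)-u(t,x)}{\delta}$, $\partial_t^-u(t,x)=\lim_{\delta\downarrow0}\frac{u(t-\delta,x)-u(t,x)}{-\delta}$, and analogously $\partial_x^\pm u$ in the $x$ variable. *)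

theory Defs
  imports "HOL-Probability.Probability"
begin

text \<open>The weak topology on probability measures on R is metrizable, so compactness
  coincides with sequential compactness.\<close>
definition weakly_compact_pm :: "real measure set \<Rightarrow> bool" where
  "weakly_compact_pm \<Theta> \<longleftrightarrow>
     (\<forall>\<mu>s :: nat \<Rightarrow> real measure. (\<forall>n. \<mu>s n \<in> \<Theta>) \<longrightarrow>
        (\<exists>(r :: nat \<Rightarrow> nat) \<mu>. strict_mono r \<and> \<mu> \<in> \<Theta> \<and> weak_conv_m (\<mu>s \<circ> r) \<mu>))"

definition rderiv :: "(real \<Rightarrow> real) \<Rightarrow> real \<Rightarrow> real" where
  "rderiv f s = Lim (at_right 0) (\<lambda>h. (f (s + h) - f s) / h)"

definition lderiv :: "(real \<Rightarrow> real) \<Rightarrow> real \<Rightarrow> real" where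
  "lderiv f s = Lim (at_right 0) (\<lambda>h. (f (s - h) - f s) / (- h))"

end

theory Submission
  imports Defs
begin

lemma at_right0_I:
  fixes f :: "real \<Rightarrow> real"
  assumes "\<And>e. e > 0 \<Longrightarrow> \<exists>d>0. \<forall>h. 0 < h \<and> h < d \<longrightarrow> \<bar>f h - L\<bar> \<le> 3 * e"
  shows "(f \<longlongrightarrow> L) (at_right 0)"
proof (rule tendstoI)
  fix e :: real assume "e > 0"
  then obtain d where d: "d > 0" "\<forall>h. 0 < h \<and> h < d \<longrightarrow> \<bar>f h - L\<bar> \<le> e/2"
    using assms[of "e/6"] by auto
  show "eventually (\<lambda>h. dist (f h) L < e) (at_right 0)"
    unfolding eventually_at_right_field
    using d \<open>e>0\<close> by (intro exI[of _ d]) (auto simp: dist_real_def)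
qed

lemma inv_lim: "(\<lambda>n. 1 / (real n + 1)) \<longlonglongrightarrow> 0"
  using LIMSEQ_inverse_real_of_nat by (simp add: inverse_eq_divide add.commute)

lemma arith_lc:
  fixes pA qA rB wB gG gH h x y e m :: real
  assumes "\<bar>qA - pA + h * x\<bar> \<le> e * h" "\<bar>rB - wB - h * y\<bar> \<le> e * h" "qA \<le> gH" "pA = gG" "rB \<le> gG" "wB = gH" "h * x = h * m"
    "0 < h"
  shows "y \<le> m + 2 * e"
proof -
  have "h * y \<le> h * m + 2 * (e * h)" using assms(1-7) by (simp only: abs_le_iff) linarith
  then have "h * y \<le> h * (m + 2 * e)" by (simp add: algebra_simps)
  then show ?thesis using assms(8) by simp
qed
lemma arith_rc:
  fixes pA qA rB wB gG gH h x y e m :: real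
  assumes "\<bar>qA - pA - h * x\<bar> \<le> e * h" "\<bar>rB - wB + h * y\<bar> \<le> e * h" "qA \<le> gH" "pA = gG" "rB \<le> gG" "wB = gH" "h * x = h * m"
    "0 < h"
  shows "m - 2 * e \<le> y"
proof -
  have "h * m - 2 * (e * h) \<le> h * y" using assms(1-7) by (simp only: abs_le_iff) linarith
  then have "h * (m - 2 * e) \<le> h * y" by (simp add: algebra_simps)
  then show ?thesis using assms(8) by simp
qed

locale dk =
  fixes Th :: "'m set" and F D :: "'m \<Rightarrow> real \<Rightarrow> real" and S :: "real set"
    and g :: "real \<Rightarrow> real" and C B :: real
  assumes ne: "Th \<noteq> {}" and S_open: "open S"
    and Fb: "\<And>\<mu> s. \<mu> \<in> Th \<Longrightarrow> s \<in> S \<Longrightarrow> \<bar>F \<mu> s\<bar> \<le> C"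
    and Db: "\<And>\<mu> s. \<mu> \<in> Th \<Longrightarrow> s \<in> S \<Longrightarrow> \<bar>D \<mu> s\<bar> \<le> B"
    and H2: "\<And>e. e > 0 \<Longrightarrow> \<exists>d>0. \<forall>\<mu>\<in>Th. \<forall>s1\<in>S. \<forall>s2\<in>S. \<bar>s2 - s1\<bar> < d \<longrightarrow>
               \<bar>F \<mu> s2 - F \<mu> s1 - (s2 - s1) * D \<mu> s1\<bar> \<le> e * \<bar>s2 - s1\<bar>"
    and H3: "\<And>e. e > 0 \<Longrightarrow> \<exists>d>0. \<forall>\<mu>\<in>Th. \<forall>s1\<in>S. \<forall>s2\<in>S. \<bar>s2 - s1\<bar> < d \<longrightarrow>
               \<bar>D \<mu> s2 - D \<mu> s1\<bar> \<le> e"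
    and H5: "\<And>ms. (\<forall>n. ms n \<in> Th) \<Longrightarrow> \<exists>(r::nat\<Rightarrow>nat) \<mu>. strict_mono r \<and> \<mu> \<in> Th \<and>
               (\<forall>s\<in>S. (\<lambda>n. F (ms (r n)) s) \<longlonglongrightarrow> F \<mu> s \<and> (\<lambda>n. D (ms (r n)) s) \<longlonglongrightarrow> D \<mu> s)"
    and g_def: "\<And>s. g s = (SUP \<mu>\<in>Th. F \<mu> s)"
begin

definition "M s = {\<mu>\<in>Th. F \<mu> s = g s}"
definition "Dmax s = (SUP \<mu>\<in>M s. D \<mu> s)"
definition "Dmin s = (INF \<mu>\<in>M s. D \<mu> s)"

lemma bddF: "s \<in> S \<Longrightarrow> bdd_above ((\<lambda>\<mu>. F \<mu> s) ` Th)"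
  using Fb by (intro bdd_aboveI[of _ C]) (auto simp: abs_le_iff)

lemma F_le_g: "\<mu> \<in> Th \<Longrightarrow> s \<in> S \<Longrightarrow> F \<mu> s \<le> g s"
  unfolding g_def by (rule cSUP_upper[OF _ bddF])

lemma g_le: "(\<And>\<mu>. \<mu> \<in> Th \<Longrightarrow> F \<mu> s \<le> c) \<Longrightarrow> g s \<le> c"
  unfolding g_def by (rule cSUP_least[OF ne])

lemma approx: "s \<in> S \<Longrightarrow> e > 0 \<Longrightarrow> \<exists>\<mu>\<in>Th. g s - e < F \<mu> s"
  unfolding g_def using less_cSUP_iff[OF ne bddF, of s "(SUP \<mu>\<in>Th. F \<mu> s) - e"] by auto

lemma M_sub: "M s \<subseteq> Th" by (auto simp: M_def)

lemma bddD: "s \<in> S \<Longrightarrow> bdd_above ((\<lambda>\<mu>. D \<mu> s) ` M s)" "s \<in> S \<Longrightarrow> bdd_below ((\<lambda>\<mu>. D \<mu> s) ` M s)"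
  using Db M_sub by (auto intro!: bdd_aboveI[of _ B] bdd_belowI[of _ "-B"] simp: abs_le_iff) (smt (verit) subsetD)+

lemma lim_in_M:
  fixes ms :: "nat \<Rightarrow> 'm" and e :: "nat \<Rightarrow> real"
  assumes ms: "\<And>n. ms n \<in> Th" and s: "s \<in> S" and lb: "\<And>n. g s - e n \<le> F (ms n) s" and e: "e \<longlonglongrightarrow> 0"
  shows "\<exists>r \<mu>. strict_mono r \<and> \<mu> \<in> M s \<and> (\<lambda>n. D (ms (r n)) s) \<longlonglongrightarrow> D \<mu> s"
proof -
  obtain r \<mu> where r: "strict_mono r" "\<mu> \<in> Th" and
    lim: "\<forall>s\<in>S. (\<lambda>n. F (ms (r n)) s) \<longlonglongrightarrow> F \<mu> s \<and> (\<lambda>n. D (ms (r n)) s) \<longlonglongrightarrow> D \<mu> s"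
    using H5[of ms] ms by blast
  have "(\<lambda>n. g s - e (r n)) \<longlonglongrightarrow> g s - 0"
    using LIMSEQ_subseq_LIMSEQ[OF e r(1)] by (intro tendsto_diff tendsto_const) (simp add: o_def)
  then have "g s \<le> F \<mu> s"
    using lim s lb by (intro LIMSEQ_le[of "\<lambda>n. g s - e (r n)" _ "\<lambda>n. F (ms (r n)) s"]) auto
  moreover have "F \<mu> s \<le> g s" using F_le_g r s by auto
  ultimately have "\<mu> \<in> M s" using r by (auto simp: M_def)
  then show ?thesis using r lim s by blast
qed

lemma M_ne: assumes s: "s \<in> S" shows "M s \<noteq> {}"
proof -
  have "\<forall>n. \<exists>\<mu>\<in>Th. g s - 1 / (real n + 1) < F \<mu> s" using approx[OF s] by simp
  then obtain ms where ms: "\<And>n. ms n \<in> Th" "\<And>n. g s - 1 / (real n + 1) < F (ms n) s" by metis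
  have "(\<lambda>n. 1 / (real n + 1)) \<longlonglongrightarrow> 0" by (rule inv_lim)
  have lb: "g s - 1 / (real n + 1) \<le> F (ms n) s" for n by (rule less_imp_le[OF ms(2)])
  obtain r \<mu> where "\<mu> \<in> M s"
    using lim_in_M[of ms s "\<lambda>n. 1 / (real n + 1)", OF ms(1) s lb inv_lim] by blast
  then show ?thesis by blast
qed

lemma Dmax_attained: assumes s: "s \<in> S" shows "\<exists>\<mu>\<in>M s. D \<mu> s = Dmax s"
proof -
  have "\<forall>n. \<exists>\<mu>\<in>M s. Dmax s - 1 / (real n + 1) < D \<mu> s"
  proof
    fix n have "Dmax s - 1 / (real n + 1) < Dmax s" by simp
    then show "\<exists>\<mu>\<in>M s. Dmax s - 1 / (real n + 1) < D \<mu> s"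
      using less_cSUP_iff[OF M_ne[OF s] bddD(1)[OF s]] unfolding Dmax_def by blast
  qed
  then obtain ms where ms: "\<And>n. ms n \<in> M s" "\<And>n. Dmax s - 1 / (real n + 1) < D (ms n) s" by metis
  have z: "(\<lambda>n. 1 / (real n + 1)) \<longlonglongrightarrow> 0" by (rule inv_lim)
  have msT: "ms n \<in> Th" for n using ms(1)[of n] by (simp add: M_def)
  have lb0: "g s - 0 \<le> F (ms n) s" for n using ms(1)[of n] by (simp add: M_def)
  obtain r \<mu> where r: "strict_mono r" "\<mu> \<in> M s" "(\<lambda>n. D (ms (r n)) s) \<longlonglongrightarrow> D \<mu> s"
    using lim_in_M[of ms s "\<lambda>n. 0", OF msT s lb0 tendsto_const] by blast
  have "(\<lambda>n. Dmax s - 1 / (real (r n) + 1)) \<longlonglongrightarrow> Dmax s - 0"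
    using LIMSEQ_subseq_LIMSEQ[OF z r(1)] by (intro tendsto_diff tendsto_const) (simp add: o_def)
  then have "Dmax s \<le> D \<mu> s"
    using r(3) ms(2) by (intro LIMSEQ_le[OF _ r(3)]) (auto intro: less_imp_le)
  moreover have "D \<mu> s \<le> Dmax s" unfolding Dmax_def using r(2) by (rule cSUP_upper[OF _ bddD(1)[OF s]])
  ultimately show ?thesis using r by force
qed

lemma Dmin_attained: assumes s: "s \<in> S" shows "\<exists>\<mu>\<in>M s. D \<mu> s = Dmin s"
proof -
  have "\<forall>n. \<exists>\<mu>\<in>M s. D \<mu> s < Dmin s + 1 / (real n + 1)"
  proof
    fix n have "Dmin s < Dmin s + 1 / (real n + 1)" by simp
    then show "\<exists>\<mu>\<in>M s. D \<mu> s < Dmin s + 1 / (real n + 1)"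
      using cINF_less_iff[OF M_ne[OF s] bddD(2)[OF s]] unfolding Dmin_def by blast
  qed
  then obtain ms where ms: "\<And>n. ms n \<in> M s" "\<And>n. D (ms n) s < Dmin s + 1 / (real n + 1)" by metis
  have z: "(\<lambda>n. 1 / (real n + 1)) \<longlonglongrightarrow> 0" by (rule inv_lim)
  have msT: "ms n \<in> Th" for n using ms(1)[of n] by (simp add: M_def)
  have lb0: "g s - 0 \<le> F (ms n) s" for n using ms(1)[of n] by (simp add: M_def)
  obtain r \<mu> where r: "strict_mono r" "\<mu> \<in> M s" "(\<lambda>n. D (ms (r n)) s) \<longlonglongrightarrow> D \<mu> s"
    using lim_in_M[of ms s "\<lambda>n. 0", OF msT s lb0 tendsto_const] by blast
  have "(\<lambda>n. Dmin s + 1 / (real (r n) + 1)) \<longlonglongrightarrow> Dmin s + 0"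
    using LIMSEQ_subseq_LIMSEQ[OF z r(1)] by (intro tendsto_add tendsto_const) (simp add: o_def)
  then have "D \<mu> s \<le> Dmin s"
    using r(3) ms(2) by (intro LIMSEQ_le[OF r(3)]) (auto intro: less_imp_le)
  moreover have "Dmin s \<le> D \<mu> s" unfolding Dmin_def using r(2) by (rule cINF_lower[OF bddD(2)[OF s]])
  ultimately show ?thesis using r by force
qed

lemma Lip: "\<exists>d>0. \<forall>\<mu>\<in>Th. \<forall>s1\<in>S. \<forall>s2\<in>S. \<bar>s2 - s1\<bar> < d \<longrightarrow> \<bar>F \<mu> s2 - F \<mu> s1\<bar> \<le> (B + 1) * \<bar>s2 - s1\<bar>"
proof -
  obtain d where d: "d > 0" "\<forall>\<mu>\<in>Th. \<forall>s1\<in>S. \<forall>s2\<in>S. \<bar>s2 - s1\<bar> < d \<longrightarrow>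
               \<bar>F \<mu> s2 - F \<mu> s1 - (s2 - s1) * D \<mu> s1\<bar> \<le> 1 * \<bar>s2 - s1\<bar>" using H2[of 1] by auto
  have "\<bar>F \<mu> s2 - F \<mu> s1\<bar> \<le> (B + 1) * \<bar>s2 - s1\<bar>" if "\<mu>\<in>Th" "s1\<in>S" "s2\<in>S" "\<bar>s2 - s1\<bar> < d" for \<mu> s1 s2
  proof -
    have a: "\<bar>F \<mu> s2 - F \<mu> s1 - (s2 - s1) * D \<mu> s1\<bar> \<le> \<bar>s2 - s1\<bar>" using d that by auto
    have "\<bar>(s2 - s1) * D \<mu> s1\<bar> \<le> \<bar>s2 - s1\<bar> * B" unfolding abs_mult
      using Db[OF that(1,2)] by (intro mult_left_mono) auto
    then show ?thesis using a by (simp add: algebra_simps)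
  qed
  then show ?thesis using d by blast
qed

lemma usc:
  assumes s: "s \<in> S" and e: "e > 0"
  shows "\<exists>d>0. \<forall>s'\<in>S. \<bar>s' - s\<bar> < d \<longrightarrow> (\<forall>\<mu>\<in>M s'. \<exists>\<nu>\<in>M s. \<bar>D \<mu> s - D \<nu> s\<bar> \<le> e)"
proof (rule ccontr)
  assume "\<not> ?thesis"
  then have neg: "\<forall>d>0. \<exists>s'\<in>S. \<bar>s' - s\<bar> < d \<and> (\<exists>\<mu>\<in>M s'. \<forall>\<nu>\<in>M s. \<bar>D \<mu> s - D \<nu> s\<bar> > e)"
    by (auto simp: not_le)
  obtain d1 where d1: "d1 > 0" "\<forall>\<mu>\<in>Th. \<forall>s1\<in>S. \<forall>s2\<in>S. \<bar>s2 - s1\<bar> < d1 \<longrightarrow> \<bar>F \<mu> s2 - F \<mu> s1\<bar> \<le> (B + 1) * \<bar>s2 - s1\<bar>"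
    using Lip by blast
  have "\<forall>n. \<exists>s'. s' \<in> S \<and> \<bar>s' - s\<bar> < min d1 (1 / (real n + 1)) \<and> (\<exists>\<mu>. \<mu> \<in> M s' \<and> (\<forall>\<nu>\<in>M s. \<bar>D \<mu> s - D \<nu> s\<bar> > e))"
    using neg d1(1) by (metis min_less_iff_conj divide_pos_pos zero_less_one of_nat_0_le_iff
          add_nonneg_pos)
  then obtain ss ms where ss: "\<And>n. ss n \<in> S" "\<And>n. \<bar>ss n - s\<bar> < min d1 (1 / (real n + 1))"
    and ms: "\<And>n. ms n \<in> M (ss n)" "\<And>n. \<forall>\<nu>\<in>M s. \<bar>D (ms n) s - D \<nu> s\<bar> > e"
    by metis
  have msT: "ms n \<in> Th" for n using ms(1) M_sub by blast
  define L where "L = B + 1"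
  have lb: "g s - 2 * L * \<bar>ss n - s\<bar> \<le> F (ms n) s" for n
  proof -
    have c: "\<bar>ss n - s\<bar> < d1" using ss(2)[of n] by simp
    have "g s \<le> g (ss n) + L * \<bar>ss n - s\<bar>"
    proof (rule g_le)
      fix \<nu> assume "\<nu> \<in> Th"
      then have "\<bar>F \<nu> s - F \<nu> (ss n)\<bar> \<le> L * \<bar>ss n - s\<bar>" using d1(2) ss(1) s c unfolding L_def
        by (metis abs_minus_commute)
      moreover have "F \<nu> (ss n) \<le> g (ss n)" using F_le_g \<open>\<nu> \<in> Th\<close> ss(1) by auto
      ultimately show "F \<nu> s \<le> g (ss n) + L * \<bar>ss n - s\<bar>" by linarith
    qed
    moreover have "g (ss n) = F (ms n) (ss n)" using ms(1)[of n] by (auto simp: M_def)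
    moreover have "\<bar>F (ms n) s - F (ms n) (ss n)\<bar> \<le> L * \<bar>ss n - s\<bar>" using d1(2) ss(1) s c msT unfolding L_def
        by (metis abs_minus_commute)
    ultimately show ?thesis by linarith
  qed
  have "(\<lambda>n. 2 * L * \<bar>ss n - s\<bar>) \<longlonglongrightarrow> 0"
  proof -
    have z: "(\<lambda>n. 1 / (real n + 1)) \<longlonglongrightarrow> 0" by (rule inv_lim)
    have "(\<lambda>n. \<bar>ss n - s\<bar>) \<longlonglongrightarrow> 0"
    proof (rule tendsto_sandwich[of "\<lambda>n. 0" _ _ "\<lambda>n. 1 / (real n + 1)"])
      have "\<forall>n. \<bar>ss n - s\<bar> \<le> 1 / (real n + 1)" using ss(2) less_imp_le by auto
      then show "\<forall>\<^sub>F n in sequentially. \<bar>ss n - s\<bar> \<le> 1 / (real n + 1)" by (simp add: always_eventually)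
    qed (use z in auto)
    then show ?thesis using tendsto_mult[OF tendsto_const[of "2*L"]] by fastforce
  qed
  then obtain r \<mu> where r: "strict_mono r" "\<mu> \<in> M s" "(\<lambda>n. D (ms (r n)) s) \<longlonglongrightarrow> D \<mu> s"
    using lim_in_M[of ms s "\<lambda>n. 2 * L * \<bar>ss n - s\<bar>", OF msT s lb] by blast
  then obtain n where "dist (D (ms (r n)) s) (D \<mu> s) < e"
    using e by (metis LIMSEQ_iff_nz dist_real_def le_refl real_norm_def)
  then show False using ms(2)[of "r n"] r(2) by (auto simp: dist_real_def)
qed



lemma band:
  assumes s: "s \<in> S" and b: "\<forall>\<mu>\<in>M s. \<bar>D \<mu> s - L\<bar> \<le> c"
  shows "\<bar>Dmax s - L\<bar> \<le> c" "\<bar>Dmin s - L\<bar> \<le> c"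
proof -
  obtain \<mu>0 where m0: "\<mu>0 \<in> M s" using M_ne[OF s] by auto
  have "Dmax s \<le> L + c" unfolding Dmax_def
    using b by (intro cSUP_least[OF M_ne[OF s]]) (auto simp: abs_le_iff)
  moreover have "D \<mu>0 s \<le> Dmax s" unfolding Dmax_def by (rule cSUP_upper[OF m0 bddD(1)[OF s]])
  moreover have "Dmin s \<ge> L - c" unfolding Dmin_def
    using b by (intro cINF_greatest[OF M_ne[OF s]]) (auto simp: abs_le_iff)
  moreover have "D \<mu>0 s \<ge> Dmin s" unfolding Dmin_def by (rule cINF_lower[OF bddD(2)[OF s] m0])
  moreover have "\<bar>D \<mu>0 s - L\<bar> \<le> c" using b m0 by auto
  ultimately show "\<bar>Dmax s - L\<bar> \<le> c" "\<bar>Dmin s - L\<bar> \<le> c" by (auto simp: abs_le_iff)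
qed

lemma T:
  assumes "e > 0"
  shows "\<exists>d>0. \<forall>\<mu>\<in>Th. \<forall>a\<in>S. \<forall>k. a + k \<in> S \<and> \<bar>k\<bar> < d \<longrightarrow>
            \<bar>F \<mu> (a + k) - F \<mu> a - k * D \<mu> a\<bar> \<le> e * \<bar>k\<bar>"
proof -
  obtain d where "d > 0" "\<forall>\<mu>\<in>Th. \<forall>s1\<in>S. \<forall>s2\<in>S. \<bar>s2 - s1\<bar> < d \<longrightarrow>
               \<bar>F \<mu> s2 - F \<mu> s1 - (s2 - s1) * D \<mu> s1\<bar> \<le> e * \<bar>s2 - s1\<bar>" using H2[OF assms] by auto
  moreover have "\<bar>F \<mu> (a + k) - F \<mu> a - k * D \<mu> a\<bar> \<le> e * \<bar>k\<bar>"
    if "\<forall>\<mu>\<in>Th. \<forall>s1\<in>S. \<forall>s2\<in>S. \<bar>s2 - s1\<bar> < d \<longrightarrow>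
               \<bar>F \<mu> s2 - F \<mu> s1 - (s2 - s1) * D \<mu> s1\<bar> \<le> e * \<bar>s2 - s1\<bar>"
       "\<mu> \<in> Th" "a \<in> S" "a + k \<in> S" "\<bar>k\<bar> < d" for \<mu> a k
    using that(1)[rule_format, OF that(2,3,4)] that(5) by simp
  ultimately show ?thesis by (intro exI[of _ d]) auto
qed

lemma quot:
  fixes h X L c :: real
  assumes "0 < h" "h * L - h * c \<le> X" "X \<le> h * L + h * c"
  shows "\<bar>X / h - L\<bar> \<le> c"
proof -
  have "L - c \<le> X / h" using assms by (simp add: field_simps)
  moreover have "X / h \<le> L + c" using assms by (simp add: field_simps)
  ultimately show ?thesis by (simp add: abs_le_iff)
qed

lemma cancel:
  fixes h X Y :: real
  assumes "0 < h" "h * X \<le> h * Y" shows "X \<le> Y"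
  using assms by simp

lemma dsetup:
  assumes s: "s \<in> S" and e: "e > 0"
  shows "\<exists>d>0. (\<forall>y. \<bar>y - s\<bar> < d \<longrightarrow> y \<in> S) \<and>
     (\<forall>\<mu>\<in>Th. \<forall>a\<in>S. \<forall>k. a + k \<in> S \<and> \<bar>k\<bar> < d \<longrightarrow>
            \<bar>F \<mu> (a + k) - F \<mu> a - k * D \<mu> a\<bar> \<le> e * \<bar>k\<bar>) \<and>
     (\<forall>\<mu>\<in>Th. \<forall>s1\<in>S. \<forall>s2\<in>S. \<bar>s2 - s1\<bar> < d \<longrightarrow> \<bar>D \<mu> s2 - D \<mu> s1\<bar> \<le> e) \<and>
     (\<forall>s'\<in>S. \<bar>s' - s\<bar> < d \<longrightarrow> (\<forall>\<mu>\<in>M s'. \<exists>\<nu>\<in>M s. \<bar>D \<mu> s - D \<nu> s\<bar> \<le> e))"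
proof -
  obtain d0 where d0: "d0 > 0" "ball s d0 \<subseteq> S" using S_open s open_contains_ball by blast
  obtain d1 where d1: "d1 > 0" "\<forall>\<mu>\<in>Th. \<forall>a\<in>S. \<forall>k. a + k \<in> S \<and> \<bar>k\<bar> < d1 \<longrightarrow>
            \<bar>F \<mu> (a + k) - F \<mu> a - k * D \<mu> a\<bar> \<le> e * \<bar>k\<bar>" using T[OF e] by blast
  obtain d2 where d2: "d2 > 0" "\<forall>\<mu>\<in>Th. \<forall>s1\<in>S. \<forall>s2\<in>S. \<bar>s2 - s1\<bar> < d2 \<longrightarrow> \<bar>D \<mu> s2 - D \<mu> s1\<bar> \<le> e"
    using H3[OF e] by blast
  obtain d3 where d3: "d3 > 0" "\<forall>s'\<in>S. \<bar>s' - s\<bar> < d3 \<longrightarrow> (\<forall>\<mu>\<in>M s'. \<exists>\<nu>\<in>M s. \<bar>D \<mu> s - D \<nu> s\<bar> \<le> e)"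
    using usc[OF s e] by blast
  show ?thesis
    apply (rule exI[of _ "min (min d0 d1) (min d2 d3)"])
    using d0 d1 d2 d3 by (auto simp: subset_iff dist_real_def abs_minus_commute)
qed


lemma right_q:
  assumes s: "s \<in> S"
  shows "((\<lambda>h. (g (s + h) - g s) / h) \<longlongrightarrow> Dmax s) (at_right 0)"
proof (rule at_right0_I)
  fix e :: real assume e: "e > 0"
  obtain d where d: "d > 0" and dS: "\<forall>y. \<bar>y - s\<bar> < d \<longrightarrow> y \<in> S"
    and dT: "\<forall>\<mu>\<in>Th. \<forall>a\<in>S. \<forall>k. a + k \<in> S \<and> \<bar>k\<bar> < d \<longrightarrow>
            \<bar>F \<mu> (a + k) - F \<mu> a - k * D \<mu> a\<bar> \<le> e * \<bar>k\<bar>"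
    and dU: "\<forall>s'\<in>S. \<bar>s' - s\<bar> < d \<longrightarrow> (\<forall>\<mu>\<in>M s'. \<exists>\<nu>\<in>M s. \<bar>D \<mu> s - D \<nu> s\<bar> \<le> e)"
    using dsetup[OF s e] by blast
  have dT': "\<And>\<mu> a k. \<mu> \<in> Th \<Longrightarrow> a \<in> S \<Longrightarrow> a + k \<in> S \<Longrightarrow> \<bar>k\<bar> < d \<Longrightarrow>
     \<bar>F \<mu> (a + k) - F \<mu> a - k * D \<mu> a\<bar> \<le> e * \<bar>k\<bar>" using dT by blast
  show "\<exists>d>0. \<forall>h. 0 < h \<and> h < d \<longrightarrow> \<bar>(g (s + h) - g s) / h - Dmax s\<bar> \<le> 3 * e"
  proof (intro exI[of _ d] conjI allI impI)
    fix h assume h: "0 < h \<and> h < d"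
    have sh: "s + h \<in> S" using dS h by auto
    obtain \<mu>1 where m1: "\<mu>1 \<in> M (s + h)" using M_ne[OF sh] by auto
    have m1T: "\<mu>1 \<in> Th" using m1 M_sub by auto
    obtain \<nu> where nu: "\<nu> \<in> M s" "\<bar>D \<mu>1 s - D \<nu> s\<bar> \<le> e" using dU sh h m1 by force
    have "D \<nu> s \<le> Dmax s" unfolding Dmax_def by (rule cSUP_upper[OF nu(1) bddD(1)[OF s]])
    then have "h * D \<mu>1 s \<le> h * (Dmax s + e)" using nu h by (intro mult_left_mono) auto
    moreover have "\<bar>F \<mu>1 (s + h) - F \<mu>1 s - h * D \<mu>1 s\<bar> \<le> e * \<bar>h\<bar>" using dT'[OF m1T s sh] h by auto
    moreover have "F \<mu>1 s \<le> g s" using F_le_g m1T s by auto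
    moreover have "F \<mu>1 (s + h) = g (s + h)" using m1 by (auto simp: M_def)
    ultimately have up: "g (s + h) - g s \<le> h * Dmax s + h * (3 * e)" using h e
      by (simp add: algebra_simps abs_le_iff)
    obtain \<mu>s where ms: "\<mu>s \<in> M s" "D \<mu>s s = Dmax s" using Dmax_attained[OF s] by auto
    have msT: "\<mu>s \<in> Th" using ms M_sub by auto
    have "\<bar>F \<mu>s (s + h) - F \<mu>s s - h * D \<mu>s s\<bar> \<le> e * \<bar>h\<bar>" using dT'[OF msT s sh] h by auto
    moreover have "F \<mu>s (s + h) \<le> g (s + h)" using F_le_g msT sh by auto
    moreover have "F \<mu>s s = g s" using ms by (auto simp: M_def)
    ultimately have lo: "h * Dmax s - h * (3 * e) \<le> g (s + h) - g s" using h e ms(2)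
      by (simp add: algebra_simps abs_le_iff)
    show "\<bar>(g (s + h) - g s) / h - Dmax s\<bar> \<le> 3 * e" using quot[OF _ lo up] h by simp
  qed (rule d)
qed


lemma left_q:
  assumes s: "s \<in> S"
  shows "((\<lambda>h. (g (s - h) - g s) / (- h)) \<longlongrightarrow> Dmin s) (at_right 0)"
proof (rule at_right0_I)
  fix e :: real assume e: "e > 0"
  obtain d where d: "d > 0" and dS: "\<forall>y. \<bar>y - s\<bar> < d \<longrightarrow> y \<in> S"
    and dT: "\<forall>\<mu>\<in>Th. \<forall>a\<in>S. \<forall>k. a + k \<in> S \<and> \<bar>k\<bar> < d \<longrightarrow>
            \<bar>F \<mu> (a + k) - F \<mu> a - k * D \<mu> a\<bar> \<le> e * \<bar>k\<bar>"
    and dD: "\<forall>\<mu>\<in>Th. \<forall>s1\<in>S. \<forall>s2\<in>S. \<bar>s2 - s1\<bar> < d \<longrightarrow> \<bar>D \<mu> s2 - D \<mu> s1\<bar> \<le> e"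
    and dU: "\<forall>s'\<in>S. \<bar>s' - s\<bar> < d \<longrightarrow> (\<forall>\<mu>\<in>M s'. \<exists>\<nu>\<in>M s. \<bar>D \<mu> s - D \<nu> s\<bar> \<le> e)"
    using dsetup[OF s e] by blast
  have dT': "\<And>\<mu> a k. \<mu> \<in> Th \<Longrightarrow> a \<in> S \<Longrightarrow> a + k \<in> S \<Longrightarrow> \<bar>k\<bar> < d \<Longrightarrow>
     \<bar>F \<mu> (a + k) - F \<mu> a - k * D \<mu> a\<bar> \<le> e * \<bar>k\<bar>" using dT by blast
  have dD': "\<And>\<mu> s1 s2. \<mu> \<in> Th \<Longrightarrow> s1 \<in> S \<Longrightarrow> s2 \<in> S \<Longrightarrow> \<bar>s2 - s1\<bar> < d \<Longrightarrow>
     \<bar>D \<mu> s2 - D \<mu> s1\<bar> \<le> e" using dD by blast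
  show "\<exists>d>0. \<forall>h. 0 < h \<and> h < d \<longrightarrow> \<bar>(g (s - h) - g s) / (- h) - Dmin s\<bar> \<le> 3 * e"
  proof (intro exI[of _ d] conjI allI impI)
    fix h assume h: "0 < h \<and> h < d"
    have sh: "s - h \<in> S" using dS h by auto
    have sh': "s + - h \<in> S" using sh by simp
    obtain \<mu>1 where m1: "\<mu>1 \<in> M (s - h)" using M_ne[OF sh] by auto
    have m1T: "\<mu>1 \<in> Th" using m1 M_sub by auto
    obtain \<nu> where nu: "\<nu> \<in> M s" "\<bar>D \<mu>1 s - D \<nu> s\<bar> \<le> e" using dU sh h m1 by force
    have "Dmin s \<le> D \<nu> s" unfolding Dmin_def by (rule cINF_lower[OF bddD(2)[OF s] nu(1)])
    then have "h * (Dmin s - e) \<le> h * D \<mu>1 s" using nu h by (intro mult_left_mono) auto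
    moreover have "\<bar>F \<mu>1 (s + - h) - F \<mu>1 s - (- h) * D \<mu>1 s\<bar> \<le> e * \<bar>- h\<bar>" using dT'[OF m1T s sh'] h by auto
    moreover have "F \<mu>1 s \<le> g s" using F_le_g m1T s by auto
    moreover have "F \<mu>1 (s - h) = g (s - h)" using m1 by (auto simp: M_def)
    ultimately have lo: "h * Dmin s - h * (3 * e) \<le> g s - g (s - h)" using h e
      by (simp add: algebra_simps abs_le_iff)
    obtain \<mu>s where ms: "\<mu>s \<in> M s" "D \<mu>s s = Dmin s" using Dmin_attained[OF s] by auto
    have msT: "\<mu>s \<in> Th" using ms M_sub by auto
    have "\<bar>F \<mu>s (s + - h) - F \<mu>s s - (- h) * D \<mu>s s\<bar> \<le> e * \<bar>- h\<bar>" using dT'[OF msT s sh'] h by auto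
    moreover have "F \<mu>s (s - h) \<le> g (s - h)" using F_le_g msT sh by auto
    moreover have "F \<mu>s s = g s" using ms by (auto simp: M_def)
    ultimately have up: "g s - g (s - h) \<le> h * Dmin s + h * (3 * e)" using h e ms(2)
      by (simp add: algebra_simps abs_le_iff)
    have "(g (s - h) - g s) / (- h) = (g s - g (s - h)) / h"
      by (simp only: divide_minus_right minus_divide_left minus_diff_eq)
    then show "\<bar>(g (s - h) - g s) / (- h) - Dmin s\<bar> \<le> 3 * e" using quot[OF _ lo up] h by simp
  qed (rule d)
qed

lemma rc_key:
  assumes s: "s \<in> S"
  shows "\<And>e. e > 0 \<Longrightarrow> \<exists>d>0. \<forall>h. 0 < h \<and> h < d \<longrightarrow> s + h \<in> S \<and> (\<forall>\<mu>\<in>M (s + h). \<bar>D \<mu> (s + h) - Dmax s\<bar> \<le> 3 * e)"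
proof -
  fix e :: real assume e: "e > 0"
  obtain d where d: "d > 0" and dS: "\<forall>y. \<bar>y - s\<bar> < d \<longrightarrow> y \<in> S"
    and dT: "\<forall>\<mu>\<in>Th. \<forall>a\<in>S. \<forall>k. a + k \<in> S \<and> \<bar>k\<bar> < d \<longrightarrow>
            \<bar>F \<mu> (a + k) - F \<mu> a - k * D \<mu> a\<bar> \<le> e * \<bar>k\<bar>"
    and dD: "\<forall>\<mu>\<in>Th. \<forall>s1\<in>S. \<forall>s2\<in>S. \<bar>s2 - s1\<bar> < d \<longrightarrow> \<bar>D \<mu> s2 - D \<mu> s1\<bar> \<le> e"
    and dU: "\<forall>s'\<in>S. \<bar>s' - s\<bar> < d \<longrightarrow> (\<forall>\<mu>\<in>M s'. \<exists>\<nu>\<in>M s. \<bar>D \<mu> s - D \<nu> s\<bar> \<le> e)"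
    using dsetup[OF s e] by blast
  have dT': "\<And>\<mu> a k. \<mu> \<in> Th \<Longrightarrow> a \<in> S \<Longrightarrow> a + k \<in> S \<Longrightarrow> \<bar>k\<bar> < d \<Longrightarrow>
     \<bar>F \<mu> (a + k) - F \<mu> a - k * D \<mu> a\<bar> \<le> e * \<bar>k\<bar>" using dT by blast
  have dD': "\<And>\<mu> s1 s2. \<mu> \<in> Th \<Longrightarrow> s1 \<in> S \<Longrightarrow> s2 \<in> S \<Longrightarrow> \<bar>s2 - s1\<bar> < d \<Longrightarrow>
     \<bar>D \<mu> s2 - D \<mu> s1\<bar> \<le> e" using dD by blast
  show "\<exists>d>0. \<forall>h. 0 < h \<and> h < d \<longrightarrow> s + h \<in> S \<and> (\<forall>\<mu>\<in>M (s + h). \<bar>D \<mu> (s + h) - Dmax s\<bar> \<le> 3 * e)"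
  proof (intro exI[of _ d] conjI allI impI ballI)
    fix h assume h: "0 < h \<and> h < d"
    show sh: "s + h \<in> S" using dS h by auto
    fix \<mu> assume m: "\<mu> \<in> M (s + h)"
    have mT: "\<mu> \<in> Th" using m M_sub by auto
    obtain \<nu> where nu: "\<nu> \<in> M s" "\<bar>D \<mu> s - D \<nu> s\<bar> \<le> e" using dU sh h m by force
    have "D \<nu> s \<le> Dmax s" unfolding Dmax_def by (rule cSUP_upper[OF nu(1) bddD(1)[OF s]])
    moreover have "\<bar>D \<mu> (s + h) - D \<mu> s\<bar> \<le> e" using dD'[OF mT s sh] h by auto
    ultimately have up: "D \<mu> (s + h) \<le> Dmax s + 3 * e" using nu e by (simp add: abs_le_iff)
    obtain \<mu>s where ms: "\<mu>s \<in> M s" "D \<mu>s s = Dmax s" using Dmax_attained[OF s] by auto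
    have msT: "\<mu>s \<in> Th" using ms M_sub by auto
    have s2: "s + h + - h \<in> S" using s by simp
    have A0: "\<bar>F \<mu>s (s + h) - F \<mu>s s - h * D \<mu>s s\<bar> \<le> e * h" using dT'[OF msT s sh] h by auto
    have B0: "\<bar>F \<mu> s - F \<mu> (s + h) + h * D \<mu> (s + h)\<bar> \<le> e * h"
      using dT'[OF mT sh s2] h by auto
    have "F \<mu>s (s + h) \<le> g (s + h)" using F_le_g msT sh by auto
    moreover have "F \<mu>s s = g s" using ms by (auto simp: M_def)
    moreover have "F \<mu> s \<le> g s" using F_le_g mT s by auto
    moreover have "F \<mu> (s + h) = g (s + h)" using m by (auto simp: M_def)
    moreover have "h * D \<mu>s s = h * Dmax s" using ms(2) by simp
    ultimately have "Dmax s - 2 * e \<le> D \<mu> (s + h)" using A0 B0 h by (intro arith_rc[where gH="g (s + h)" and gG="g s", OF A0 B0]) auto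
    then have "Dmax s - 3 * e \<le> D \<mu> (s + h)" using e by simp
    then show "\<bar>D \<mu> (s + h) - Dmax s\<bar> \<le> 3 * e" using up by (simp add: abs_le_iff)
  qed (rule d)
qed

lemma lc_key:
  assumes s: "s \<in> S"
  shows "\<And>e. e > 0 \<Longrightarrow> \<exists>d>0. \<forall>h. 0 < h \<and> h < d \<longrightarrow> s - h \<in> S \<and> (\<forall>\<mu>\<in>M (s - h). \<bar>D \<mu> (s - h) - Dmin s\<bar> \<le> 3 * e)"
proof -
  fix e :: real assume e: "e > 0"
  obtain d where d: "d > 0" and dS: "\<forall>y. \<bar>y - s\<bar> < d \<longrightarrow> y \<in> S"
    and dT: "\<forall>\<mu>\<in>Th. \<forall>a\<in>S. \<forall>k. a + k \<in> S \<and> \<bar>k\<bar> < d \<longrightarrow>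
            \<bar>F \<mu> (a + k) - F \<mu> a - k * D \<mu> a\<bar> \<le> e * \<bar>k\<bar>"
    and dD: "\<forall>\<mu>\<in>Th. \<forall>s1\<in>S. \<forall>s2\<in>S. \<bar>s2 - s1\<bar> < d \<longrightarrow> \<bar>D \<mu> s2 - D \<mu> s1\<bar> \<le> e"
    and dU: "\<forall>s'\<in>S. \<bar>s' - s\<bar> < d \<longrightarrow> (\<forall>\<mu>\<in>M s'. \<exists>\<nu>\<in>M s. \<bar>D \<mu> s - D \<nu> s\<bar> \<le> e)"
    using dsetup[OF s e] by blast
  have dT': "\<And>\<mu> a k. \<mu> \<in> Th \<Longrightarrow> a \<in> S \<Longrightarrow> a + k \<in> S \<Longrightarrow> \<bar>k\<bar> < d \<Longrightarrow>
     \<bar>F \<mu> (a + k) - F \<mu> a - k * D \<mu> a\<bar> \<le> e * \<bar>k\<bar>" using dT by blast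
  have dD': "\<And>\<mu> s1 s2. \<mu> \<in> Th \<Longrightarrow> s1 \<in> S \<Longrightarrow> s2 \<in> S \<Longrightarrow> \<bar>s2 - s1\<bar> < d \<Longrightarrow>
     \<bar>D \<mu> s2 - D \<mu> s1\<bar> \<le> e" using dD by blast
  show "\<exists>d>0. \<forall>h. 0 < h \<and> h < d \<longrightarrow> s - h \<in> S \<and> (\<forall>\<mu>\<in>M (s - h). \<bar>D \<mu> (s - h) - Dmin s\<bar> \<le> 3 * e)"
  proof (intro exI[of _ d] conjI allI impI ballI)
    fix h assume h: "0 < h \<and> h < d"
    show sh: "s - h \<in> S" using dS h by auto
    have sh': "s + - h \<in> S" using sh by simp
    fix \<mu> assume m: "\<mu> \<in> M (s - h)"
    have mT: "\<mu> \<in> Th" using m M_sub by auto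
    obtain \<nu> where nu: "\<nu> \<in> M s" "\<bar>D \<mu> s - D \<nu> s\<bar> \<le> e" using dU sh h m by force
    have "Dmin s \<le> D \<nu> s" unfolding Dmin_def by (rule cINF_lower[OF bddD(2)[OF s] nu(1)])
    moreover have "\<bar>D \<mu> (s - h) - D \<mu> s\<bar> \<le> e" using dD'[OF mT s sh] h by auto
    ultimately have lo: "Dmin s - 3 * e \<le> D \<mu> (s - h)" using nu e by (simp add: abs_le_iff)
    obtain \<mu>s where ms: "\<mu>s \<in> M s" "D \<mu>s s = Dmin s" using Dmin_attained[OF s] by auto
    have msT: "\<mu>s \<in> Th" using ms M_sub by auto
    have s2: "s - h + h \<in> S" using s by simp
    have A0: "\<bar>F \<mu>s (s - h) - F \<mu>s s + h * D \<mu>s s\<bar> \<le> e * h" using dT'[OF msT s sh'] h by auto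
    have B0: "\<bar>F \<mu> s - F \<mu> (s - h) - h * D \<mu> (s - h)\<bar> \<le> e * h"
      using dT'[OF mT sh s2] h by auto
    have "F \<mu>s (s - h) \<le> g (s - h)" using F_le_g msT sh by auto
    moreover have "F \<mu>s s = g s" using ms by (auto simp: M_def)
    moreover have "F \<mu> s \<le> g s" using F_le_g mT s by auto
    moreover have "F \<mu> (s - h) = g (s - h)" using m by (auto simp: M_def)
    moreover have "h * D \<mu>s s = h * Dmin s" using ms(2) by simp
    ultimately have "D \<mu> (s - h) \<le> Dmin s + 2 * e" using A0 B0 h by (intro arith_lc[where gH="g (s - h)" and gG="g s", OF A0 B0]) auto
    then have "D \<mu> (s - h) \<le> Dmin s + 3 * e" using e by simp
    then show "\<bar>D \<mu> (s - h) - Dmin s\<bar> \<le> 3 * e" using lo by (simp add: abs_le_iff)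
  qed (rule d)
qed

lemma rc:
  assumes s: "s \<in> S"
  shows "((\<lambda>h. Dmax (s + h)) \<longlongrightarrow> Dmax s) (at_right 0)" "((\<lambda>h. Dmin (s + h)) \<longlongrightarrow> Dmax s) (at_right 0)"
proof -
  have *: "\<exists>d>0. \<forall>h. 0 < h \<and> h < d \<longrightarrow> \<bar>Dmax (s + h) - Dmax s\<bar> \<le> 3 * e"
    "\<exists>d>0. \<forall>h. 0 < h \<and> h < d \<longrightarrow> \<bar>Dmin (s + h) - Dmax s\<bar> \<le> 3 * e"
    if e: "e > 0" for e
  proof -
    obtain d where d: "d > 0" "\<forall>h. 0 < h \<and> h < d \<longrightarrow> s + h \<in> S \<and> (\<forall>\<mu>\<in>M (s + h). \<bar>D \<mu> (s + h) - Dmax s\<bar> \<le> 3 * e)"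
      using rc_key[OF s e] by blast
    have **: "\<bar>Dmax (s + h) - Dmax s\<bar> \<le> 3 * e \<and> \<bar>Dmin (s + h) - Dmax s\<bar> \<le> 3 * e" if "0 < h \<and> h < d" for h
    proof -
      have a: "s + h \<in> S" and b: "\<forall>\<mu>\<in>M (s + h). \<bar>D \<mu> (s + h) - Dmax s\<bar> \<le> 3 * e" using d(2) that by auto
      show ?thesis using band(1)[OF a b] band(2)[OF a b] by simp
    qed
    show "\<exists>d>0. \<forall>h. 0 < h \<and> h < d \<longrightarrow> \<bar>Dmax (s + h) - Dmax s\<bar> \<le> 3 * e"
      using d(1) ** by (intro exI[of _ d]) simp
    show "\<exists>d>0. \<forall>h. 0 < h \<and> h < d \<longrightarrow> \<bar>Dmin (s + h) - Dmax s\<bar> \<le> 3 * e"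
      using d(1) ** by (intro exI[of _ d]) simp
  qed
  show "((\<lambda>h. Dmax (s + h)) \<longlongrightarrow> Dmax s) (at_right 0)"
    by (rule at_right0_I) (rule *(1))
  show "((\<lambda>h. Dmin (s + h)) \<longlongrightarrow> Dmax s) (at_right 0)"
    by (rule at_right0_I) (rule *(2))
qed

lemma lc:
  assumes s: "s \<in> S"
  shows "((\<lambda>h. Dmax (s - h)) \<longlongrightarrow> Dmin s) (at_right 0)" "((\<lambda>h. Dmin (s - h)) \<longlongrightarrow> Dmin s) (at_right 0)"
proof -
  have *: "\<exists>d>0. \<forall>h. 0 < h \<and> h < d \<longrightarrow> \<bar>Dmax (s - h) - Dmin s\<bar> \<le> 3 * e"
    "\<exists>d>0. \<forall>h. 0 < h \<and> h < d \<longrightarrow> \<bar>Dmin (s - h) - Dmin s\<bar> \<le> 3 * e"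
    if e: "e > 0" for e
  proof -
    obtain d where d: "d > 0" "\<forall>h. 0 < h \<and> h < d \<longrightarrow> s - h \<in> S \<and> (\<forall>\<mu>\<in>M (s - h). \<bar>D \<mu> (s - h) - Dmin s\<bar> \<le> 3 * e)"
      using lc_key[OF s e] by blast
    have **: "\<bar>Dmax (s - h) - Dmin s\<bar> \<le> 3 * e \<and> \<bar>Dmin (s - h) - Dmin s\<bar> \<le> 3 * e" if "0 < h \<and> h < d" for h
    proof -
      have a: "s - h \<in> S" and b: "\<forall>\<mu>\<in>M (s - h). \<bar>D \<mu> (s - h) - Dmin s\<bar> \<le> 3 * e" using d(2) that by auto
      show ?thesis using band(1)[OF a b] band(2)[OF a b] by simp
    qed
    show "\<exists>d>0. \<forall>h. 0 < h \<and> h < d \<longrightarrow> \<bar>Dmax (s - h) - Dmin s\<bar> \<le> 3 * e"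
      using d(1) ** by (intro exI[of _ d]) simp
    show "\<exists>d>0. \<forall>h. 0 < h \<and> h < d \<longrightarrow> \<bar>Dmin (s - h) - Dmin s\<bar> \<le> 3 * e"
      using d(1) ** by (intro exI[of _ d]) simp
  qed
  show "((\<lambda>h. Dmax (s - h)) \<longlongrightarrow> Dmin s) (at_right 0)"
    by (rule at_right0_I) (rule *(1))
  show "((\<lambda>h. Dmin (s - h)) \<longlongrightarrow> Dmin s) (at_right 0)"
    by (rule at_right0_I) (rule *(2))
qed


lemma rderiv_eq: "s \<in> S \<Longrightarrow> rderiv g s = Dmax s"
  unfolding rderiv_def by (rule tendsto_Lim[OF trivial_limit_at_right_real right_q])

lemma lderiv_eq: "s \<in> S \<Longrightarrow> lderiv g s = Dmin s"
  unfolding lderiv_def by (rule tendsto_Lim[OF trivial_limit_at_right_real left_q])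

lemma evS:
  assumes s: "s \<in> S"
  shows "eventually (\<lambda>h. s + h \<in> S) (at_right 0)" "eventually (\<lambda>h. s - h \<in> S) (at_right 0)"
proof -
  obtain d where d: "d > 0" "ball s d \<subseteq> S" using S_open s open_contains_ball by blast
  show "eventually (\<lambda>h. s + h \<in> S) (at_right 0)" unfolding eventually_at_right_field
    using d by (intro exI[of _ d]) (auto simp: subset_iff dist_real_def)
  show "eventually (\<lambda>h. s - h \<in> S) (at_right 0)" unfolding eventually_at_right_field
    using d by (intro exI[of _ d]) (auto simp: subset_iff dist_real_def)
qed

lemma main_dk:
  assumes s: "s \<in> S"
  shows "((\<lambda>h. (g (s + h) - g s) / h) \<longlongrightarrow> (SUP \<mu>\<in>{\<mu>\<in>Th. F \<mu> s = g s}. D \<mu> s)) (at_right 0)"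
    "((\<lambda>h. (g (s - h) - g s) / (- h)) \<longlongrightarrow> (INF \<mu>\<in>{\<mu>\<in>Th. F \<mu> s = g s}. D \<mu> s)) (at_right 0)"
    "((\<lambda>\<delta>. rderiv g (s + \<delta>)) \<longlongrightarrow> rderiv g s) (at_right 0)"
    "((\<lambda>\<delta>. lderiv g (s + \<delta>)) \<longlongrightarrow> rderiv g s) (at_right 0)"
    "((\<lambda>\<delta>. rderiv g (s - \<delta>)) \<longlongrightarrow> lderiv g s) (at_right 0)"
    "((\<lambda>\<delta>. lderiv g (s - \<delta>)) \<longlongrightarrow> lderiv g s) (at_right 0)"
proof -
  show "((\<lambda>h. (g (s + h) - g s) / h) \<longlongrightarrow> (SUP \<mu>\<in>{\<mu>\<in>Th. F \<mu> s = g s}. D \<mu> s)) (at_right 0)"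
    using right_q[OF s] unfolding Dmax_def M_def .
  show "((\<lambda>h. (g (s - h) - g s) / (- h)) \<longlongrightarrow> (INF \<mu>\<in>{\<mu>\<in>Th. F \<mu> s = g s}. D \<mu> s)) (at_right 0)"
    using left_q[OF s] unfolding Dmin_def M_def .
  have e1: "eventually (\<lambda>h. rderiv g (s + h) = Dmax (s + h)) (at_right 0)"
    using evS(1)[OF s] by eventually_elim (rule rderiv_eq)
  have e2: "eventually (\<lambda>h. lderiv g (s + h) = Dmin (s + h)) (at_right 0)"
    using evS(1)[OF s] by eventually_elim (rule lderiv_eq)
  have e3: "eventually (\<lambda>h. rderiv g (s - h) = Dmax (s - h)) (at_right 0)"
    using evS(2)[OF s] by eventually_elim (rule rderiv_eq)
  have e4: "eventually (\<lambda>h. lderiv g (s - h) = Dmin (s - h)) (at_right 0)"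
    using evS(2)[OF s] by eventually_elim (rule lderiv_eq)
  show "((\<lambda>\<delta>. rderiv g (s + \<delta>)) \<longlongrightarrow> rderiv g s) (at_right 0)"
    unfolding rderiv_eq[OF s] tendsto_cong[OF e1] by (rule rc(1)[OF s])
  show "((\<lambda>\<delta>. lderiv g (s + \<delta>)) \<longlongrightarrow> rderiv g s) (at_right 0)"
    unfolding rderiv_eq[OF s] tendsto_cong[OF e2] by (rule rc(2)[OF s])
  show "((\<lambda>\<delta>. rderiv g (s - \<delta>)) \<longlongrightarrow> lderiv g s) (at_right 0)"
    unfolding lderiv_eq[OF s] tendsto_cong[OF e3] by (rule lc(1)[OF s])
  show "((\<lambda>\<delta>. lderiv g (s - \<delta>)) \<longlongrightarrow> lderiv g s) (at_right 0)"
    unfolding lderiv_eq[OF s] tendsto_cong[OF e4] by (rule lc(2)[OF s])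
qed

end



definition wf :: "real \<Rightarrow> real \<Rightarrow> real" where
  "wf \<rho> y = \<bar>y\<bar> * min 1 (\<rho> * \<bar>y\<bar>) + \<rho> * \<bar>y\<bar> + \<rho>"

lemma trunc_bd:
  fixes N y :: real
  assumes "N > 0"
  shows "\<bar>y - max (- N) (min N y)\<bar> \<le> \<bar>y\<bar> * indicator {z. \<bar>z\<bar> > N} y"
  using assms by (auto simp: indicator_def max_def min_def)
lemma pw2:
  fixes a b c Bp :: real
  assumes "\<bar>a - b\<bar> \<le> c" "\<bar>p\<bar> \<le> Bp" "0 \<le> c"
  shows "\<bar>a * p - b * p\<bar> \<le> Bp * c"
proof -
  have "\<bar>a - b\<bar> * \<bar>p\<bar> \<le> c * Bp" using assms by (intro mult_mono) auto
  then show ?thesis by (simp add: abs_mult left_diff_distrib[symmetric] mult.commute)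
qed

locale thetaF =
  fixes \<Theta> :: "real measure set"
  assumes prob: "\<And>\<mu>. \<mu> \<in> \<Theta> \<Longrightarrow> prob_space \<mu> \<and> sets \<mu> = sets borel"
    and unif_int: "((\<lambda>N. SUP \<mu>\<in>\<Theta>. \<integral>\<^sup>+ y. ennreal (\<bar>y\<bar> * indicator {z. \<bar>z\<bar> > N} y) \<partial>\<mu>) \<longlongrightarrow> 0) at_top"
begin

lemma rd: "\<mu> \<in> \<Theta> \<Longrightarrow> real_distribution \<mu>"
  using prob[of \<mu>] by (simp add: real_distribution_def real_distribution_axioms_def)

lemma meas_mu:
  assumes "\<mu> \<in> \<Theta>" "f \<in> borel_measurable borel" shows "f \<in> borel_measurable \<mu>"
proof -
  have "sets \<mu> = sets borel" using prob assms(1) by auto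
  then show ?thesis using assms(2) by (subst measurable_cong_sets[of \<mu> borel borel borel]) auto
qed

lemma bint:
  fixes c :: real
  assumes mu: "\<mu> \<in> \<Theta>" and f: "f \<in> borel_measurable borel" and b: "\<And>y. \<bar>f y\<bar> \<le> c"
  shows "integrable \<mu> f" "\<bar>\<integral>y. f y \<partial>\<mu>\<bar> \<le> c"
proof -
  interpret real_distribution \<mu> using rd[OF mu] .
  have fm: "f \<in> borel_measurable \<mu>" using meas_mu[OF mu f] .
  show i: "integrable \<mu> f" using b fm by (intro integrable_const_bound[where B=c]) auto
  have "\<bar>\<integral>y. f y \<partial>\<mu>\<bar> \<le> (\<integral>y. c \<partial>\<mu>)"
    using i b by (intro integral_abs_bound_integral) auto
  then show "\<bar>\<integral>y. f y \<partial>\<mu>\<bar> \<le> c" using prob_space by simp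
qed

lemma tail_eq: "(\<lambda>y. \<bar>y\<bar> * indicator {z. \<bar>z\<bar> > N} y) = (\<lambda>y::real. if N < \<bar>y\<bar> then \<bar>y\<bar> else 0)"
  by (auto simp: indicator_def fun_eq_iff)

lemma tail_meas: "(\<lambda>y. \<bar>y\<bar> * indicator {z. \<bar>z\<bar> > N} y) \<in> borel_measurable (borel :: real measure)"
  unfolding tail_eq by measurable

lemma tail:
  assumes e: "e > 0"
  shows "\<exists>N>0. \<forall>\<mu>\<in>\<Theta>. integrable \<mu> (\<lambda>y. \<bar>y\<bar> * indicator {z. \<bar>z\<bar> > N} y) \<and>
            (\<integral>y. \<bar>y\<bar> * indicator {z. \<bar>z\<bar> > N} y \<partial>\<mu>) \<le> e"
proof -
  have "eventually (\<lambda>N. (SUP \<mu>\<in>\<Theta>. \<integral>\<^sup>+ y. ennreal (\<bar>y\<bar> * indicator {z. \<bar>z\<bar> > N} y) \<partial>\<mu>) < ennreal e) at_top"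
    using order_tendstoD(2)[OF unif_int] e by simp
  then obtain N0 where N0: "\<And>N. N \<ge> N0 \<Longrightarrow> (SUP \<mu>\<in>\<Theta>. \<integral>\<^sup>+ y. ennreal (\<bar>y\<bar> * indicator {z. \<bar>z\<bar> > N} y) \<partial>\<mu>) < ennreal e"
    by (auto simp: eventually_at_top_linorder)
  define N where "N = max N0 1"
  have Npos: "N > 0" by (simp add: N_def)
  have "integrable \<mu> (\<lambda>y. \<bar>y\<bar> * indicator {z. \<bar>z\<bar> > N} y) \<and>
            (\<integral>y. \<bar>y\<bar> * indicator {z. \<bar>z\<bar> > N} y \<partial>\<mu>) \<le> e" if mu: "\<mu> \<in> \<Theta>" for \<mu>
  proof -
    have nn: "(\<integral>\<^sup>+ y. ennreal (\<bar>y\<bar> * indicator {z. \<bar>z\<bar> > N} y) \<partial>\<mu>) < ennreal e"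
      using SUP_upper[OF mu, of "\<lambda>\<mu>. \<integral>\<^sup>+ y. ennreal (\<bar>y\<bar> * indicator {z. \<bar>z\<bar> > N} y) \<partial>\<mu>"] N0[of N]
      by (simp add: N_def)
    have m: "(\<lambda>y. \<bar>y\<bar> * indicator {z. \<bar>z\<bar> > N} y) \<in> borel_measurable \<mu>" using meas_mu[OF mu tail_meas] .
    have i: "integrable \<mu> (\<lambda>y. \<bar>y\<bar> * indicator {z. \<bar>z\<bar> > N} y)"
      using nn m by (intro integrableI_nonneg) (auto simp: top.not_eq_extremum intro: less_trans)
    have "ennreal (\<integral>y. \<bar>y\<bar> * indicator {z. \<bar>z\<bar> > N} y \<partial>\<mu>) < ennreal e"
      using nn nn_integral_eq_integral[OF i] by simp
    moreover have "0 \<le> (\<integral>y. \<bar>y\<bar> * indicator {z. \<bar>z\<bar> > N} y \<partial>\<mu>)" by (intro integral_nonneg_AE) auto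
    ultimately show ?thesis using i ennreal_less_iff by auto
  qed
  then show ?thesis using Npos by blast
qed


lemma moment: "\<exists>K\<ge>0. \<forall>\<mu>\<in>\<Theta>. integrable \<mu> (\<lambda>y. y) \<and> integrable \<mu> (\<lambda>y. \<bar>y\<bar>) \<and> (\<integral>y. \<bar>y\<bar> \<partial>\<mu>) \<le> K"
proof -
  obtain N where N: "N > 0" "\<forall>\<mu>\<in>\<Theta>. integrable \<mu> (\<lambda>y. \<bar>y\<bar> * indicator {z. \<bar>z\<bar> > N} y) \<and>
            (\<integral>y. \<bar>y\<bar> * indicator {z. \<bar>z\<bar> > N} y \<partial>\<mu>) \<le> 1" using tail[of 1] by auto
  have "integrable \<mu> (\<lambda>y. y) \<and> integrable \<mu> (\<lambda>y. \<bar>y\<bar>) \<and> (\<integral>y. \<bar>y\<bar> \<partial>\<mu>) \<le> 1 + N" if mu: "\<mu> \<in> \<Theta>" for \<mu>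
  proof -
    interpret real_distribution \<mu> using rd[OF mu] .
    have it: "integrable \<mu> (\<lambda>y. \<bar>y\<bar> * indicator {z. \<bar>z\<bar> > N} y)" and tb: "(\<integral>y. \<bar>y\<bar> * indicator {z. \<bar>z\<bar> > N} y \<partial>\<mu>) \<le> 1"
      using N mu by auto
    have ih: "integrable \<mu> (\<lambda>y. \<bar>y\<bar> * indicator {z. \<bar>z\<bar> > N} y + N)" using it by simp
    have pw: "\<bar>y\<bar> \<le> \<bar>y\<bar> * indicator {z. \<bar>z\<bar> > N} y + N" for y :: real
      using N(1) by (auto simp: indicator_def)
    have idm: "(\<lambda>y::real. y) \<in> borel_measurable \<mu>" by (rule meas_mu[OF mu]) simp
    have i1: "integrable \<mu> (\<lambda>y. y)"
    proof (rule Bochner_Integration.integrable_bound[OF ih idm])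
      show "AE x in \<mu>. norm x \<le> norm (\<bar>x\<bar> * indicator {z. \<bar>z\<bar> > N} x + N)"
        using pw by (intro AE_I2) (smt (verit) real_norm_def)
    qed
    have i2: "integrable \<mu> (\<lambda>y. \<bar>y\<bar>)" using i1 by (rule integrable_abs)
    have "(\<integral>y. \<bar>y\<bar> \<partial>\<mu>) \<le> (\<integral>y. \<bar>y\<bar> * indicator {z. \<bar>z\<bar> > N} y + N \<partial>\<mu>)"
      by (rule integral_mono[OF i2 ih pw])
    also have "\<dots> = (\<integral>y. \<bar>y\<bar> * indicator {z. \<bar>z\<bar> > N} y \<partial>\<mu>) + N"
      using it prob_space by simp
    finally show ?thesis using i1 i2 tb by simp
  qed
  then show ?thesis using N(1) by (intro exI[of _ "1 + N"]) auto
qed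

lemma UI:
  assumes e: "e > 0"
  shows "\<exists>\<eta>>0. \<forall>\<mu>\<in>\<Theta>. \<forall>\<rho> c f. 0 \<le> \<rho> \<and> \<rho> \<le> \<eta> \<and> 0 \<le> c \<and> f \<in> borel_measurable borel \<and>
      (\<forall>y. \<bar>f y\<bar> \<le> c * wf \<rho> y) \<longrightarrow> integrable \<mu> f \<and> \<bar>\<integral>y. f y \<partial>\<mu>\<bar> \<le> c * e"
proof -
  obtain K where K: "K \<ge> 0" "\<forall>\<mu>\<in>\<Theta>. integrable \<mu> (\<lambda>y. y) \<and> integrable \<mu> (\<lambda>y. \<bar>y\<bar>) \<and> (\<integral>y. \<bar>y\<bar> \<partial>\<mu>) \<le> K"
    using moment by blast
  obtain N where N: "N > 0" "\<forall>\<mu>\<in>\<Theta>. integrable \<mu> (\<lambda>y. \<bar>y\<bar> * indicator {z. \<bar>z\<bar> > N} y) \<and>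
            (\<integral>y. \<bar>y\<bar> * indicator {z. \<bar>z\<bar> > N} y \<partial>\<mu>) \<le> e / 2" using tail[of "e/2"] e by auto
  define \<eta> where "\<eta> = e / (2 * (N^2 + K + 1))"
  have pos: "N^2 + K + 1 > 0" using K(1) by (simp add: add_nonneg_pos)
  have \<eta>: "\<eta> > 0" using e pos by (simp add: \<eta>_def)
  have key: "\<eta> * (N^2 + K + 1) = e / 2" using pos unfolding \<eta>_def by (simp add: field_simps)
  show ?thesis
  proof (intro exI[of _ \<eta>] conjI \<eta> ballI allI impI)
    fix \<mu> \<rho> c f assume mu: "\<mu> \<in> \<Theta>" and H: "0 \<le> \<rho> \<and> \<rho> \<le> \<eta> \<and> 0 \<le> c \<and> f \<in> borel_measurable borel \<and> (\<forall>y. \<bar>f y\<bar> \<le> c * wf \<rho> y)"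
    interpret real_distribution \<mu> using rd[OF mu] .
    have it: "integrable \<mu> (\<lambda>y. \<bar>y\<bar> * indicator {z. \<bar>z\<bar> > N} y)" and tb: "(\<integral>y. \<bar>y\<bar> * indicator {z. \<bar>z\<bar> > N} y \<partial>\<mu>) \<le> e / 2"
      using N mu by auto
    have ia: "integrable \<mu> (\<lambda>y. \<bar>y\<bar>)" and ka: "(\<integral>y. \<bar>y\<bar> \<partial>\<mu>) \<le> K" using K mu by auto
    define W where "W y = \<bar>y\<bar> * indicator {z. \<bar>z\<bar> > N} y + \<rho> * N^2 + \<rho> * \<bar>y\<bar> + \<rho>" for y :: real
    have iW: "integrable \<mu> W" unfolding W_def using it ia by simp
    have intW: "(\<integral>y. W y \<partial>\<mu>) = (\<integral>y. \<bar>y\<bar> * indicator {z. \<bar>z\<bar> > N} y \<partial>\<mu>) + \<rho> * N^2 + \<rho> * (\<integral>y. \<bar>y\<bar> \<partial>\<mu>) + \<rho>"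
      unfolding W_def using it ia prob_space by simp
    have "\<rho> * (\<integral>y. \<bar>y\<bar> \<partial>\<mu>) \<le> \<rho> * K" using H ka by (intro mult_left_mono) auto
    moreover have "\<rho> * (N^2 + K + 1) \<le> \<eta> * (N^2 + K + 1)" using H pos by (intro mult_right_mono) auto
    ultimately have intWb: "(\<integral>y. W y \<partial>\<mu>) \<le> e" using intW tb key by (simp add: algebra_simps)
    have Wn: "0 \<le> W y" for y unfolding W_def using H by (auto simp: indicator_def)
    have pw: "wf \<rho> y \<le> W y" for y
    proof -
      have "\<bar>y\<bar> * min 1 (\<rho> * \<bar>y\<bar>) \<le> \<bar>y\<bar> * indicator {z. \<bar>z\<bar> > N} y + \<rho> * N^2"
      proof (cases "N < \<bar>y\<bar>")
        case True
        have "\<bar>y\<bar> * min 1 (\<rho> * \<bar>y\<bar>) \<le> \<bar>y\<bar> * 1" by (intro mult_left_mono) auto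
        moreover have "0 \<le> \<rho> * N^2" using H by simp
        ultimately show ?thesis using True by (simp add: indicator_def)
      next
        case False
        have "\<bar>y\<bar> * min 1 (\<rho> * \<bar>y\<bar>) \<le> \<bar>y\<bar> * (\<rho> * \<bar>y\<bar>)" by (intro mult_left_mono) auto
        also have "\<dots> = \<rho> * \<bar>y\<bar>^2" by (simp add: power2_eq_square)
        also have "\<dots> \<le> \<rho> * N^2" using False H by (intro mult_left_mono power_mono) auto
        finally show ?thesis using False by (simp add: indicator_def)
      qed
      then show ?thesis unfolding wf_def W_def by simp
    qed
    have fm: "f \<in> borel_measurable \<mu>" using meas_mu[OF mu] H by blast
    have fb: "\<bar>f y\<bar> \<le> c * W y" for y using H pw[of y] by (meson mult_left_mono order_trans)
    have icW: "integrable \<mu> (\<lambda>y. c * W y)" using iW by simp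
    have fi: "integrable \<mu> f"
    proof (rule Bochner_Integration.integrable_bound[OF icW fm])
      show "AE x in \<mu>. norm (f x) \<le> norm (c * W x)" using fb Wn H by (intro AE_I2) (simp add: abs_mult)
    qed
    have "\<bar>\<integral>y. f y \<partial>\<mu>\<bar> \<le> (\<integral>y. c * W y \<partial>\<mu>)"
      by (rule integral_abs_bound_integral[OF fi icW fb])
    also have "\<dots> = c * (\<integral>y. W y \<partial>\<mu>)" by simp
    also have "\<dots> \<le> c * e" using intWb H by (intro mult_left_mono) auto
    finally show "\<bar>\<integral>y. f y \<partial>\<mu>\<bar> \<le> c * e" .
    show "integrable \<mu> f" by (rule fi)
  qed
qed


lemma lin_int:
  fixes \<psi> :: "real \<Rightarrow> real"
  assumes mu: "\<mu> \<in> \<Theta>" and pm: "\<psi> \<in> borel_measurable borel" and pb: "\<And>y. \<bar>\<psi> y\<bar> \<le> Bp"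
  shows "integrable \<mu> (\<lambda>y. y * \<psi> y)"
proof -
  obtain K where K: "\<forall>\<mu>\<in>\<Theta>. integrable \<mu> (\<lambda>y. y) \<and> integrable \<mu> (\<lambda>y. \<bar>y\<bar>) \<and> (\<integral>y. \<bar>y\<bar> \<partial>\<mu>) \<le> K"
    using moment by blast
  have ia: "integrable \<mu> (\<lambda>y. Bp * \<bar>y\<bar>)" using K mu by simp
  have "(\<lambda>y. y * \<psi> y) \<in> borel_measurable borel" using pm by measurable
  then have m: "(\<lambda>y. y * \<psi> y) \<in> borel_measurable \<mu>" by (rule meas_mu[OF mu])
  show ?thesis
  proof (rule Bochner_Integration.integrable_bound[OF ia m])
    have "\<bar>y * \<psi> y\<bar> \<le> \<bar>Bp * \<bar>y\<bar>\<bar>" for y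
    proof -
      have "\<bar>y * \<psi> y\<bar> = \<bar>y\<bar> * \<bar>\<psi> y\<bar>" by (simp add: abs_mult)
      also have "\<dots> \<le> \<bar>y\<bar> * Bp" using pb by (intro mult_left_mono) auto
      also have "\<dots> \<le> \<bar>y\<bar> * \<bar>Bp\<bar>" by (intro mult_left_mono) auto
      also have "\<dots> = \<bar>Bp * \<bar>y\<bar>\<bar>" by (simp add: abs_mult)
      finally show ?thesis .
    qed
    then show "AE x in \<mu>. norm (x * \<psi> x) \<le> norm (Bp * \<bar>x\<bar>)" by simp
  qed
qed

lemma conv_bdd:
  fixes \<psi> :: "real \<Rightarrow> real"
  assumes nu: "\<And>n. \<nu> n \<in> \<Theta>" and mu: "\<mu> \<in> \<Theta>" and wc: "weak_conv_m \<nu> \<mu>"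
    and pc: "continuous_on UNIV \<psi>" and pb: "\<And>y. \<bar>\<psi> y\<bar> \<le> Bp"
  shows "(\<lambda>n. \<integral>y. \<psi> y \<partial>\<nu> n) \<longlonglongrightarrow> (\<integral>y. \<psi> y \<partial>\<mu>)"
proof -
  have ic: "isCont \<psi> y" for y using pc by (simp add: continuous_on_eq_continuous_at)
  have nb: "norm (\<psi> y) \<le> Bp" for y using pb[of y] by simp
  show ?thesis by (rule weak_conv_imp_integral_bdd_continuous_conv[OF rd[OF nu] rd[OF mu] wc ic nb])
qed

lemma conv_lin:
  fixes \<psi> :: "real \<Rightarrow> real"
  assumes nu: "\<And>n. \<nu> n \<in> \<Theta>" and mu: "\<mu> \<in> \<Theta>" and wc: "weak_conv_m \<nu> \<mu>"
    and pc: "continuous_on UNIV \<psi>" and pb: "\<And>y. \<bar>\<psi> y\<bar> \<le> Bp"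
  shows "(\<lambda>n. \<integral>y. y * \<psi> y \<partial>\<nu> n) \<longlonglongrightarrow> (\<integral>y. y * \<psi> y \<partial>\<mu>)"
proof (rule LIMSEQ_I)
  fix r :: real assume r: "r > 0"
  have Bp: "0 \<le> Bp" using pb[of 0] by linarith
  obtain N where N: "N > 0" "\<forall>\<mu>\<in>\<Theta>. integrable \<mu> (\<lambda>y. \<bar>y\<bar> * indicator {z. \<bar>z\<bar> > N} y) \<and>
            (\<integral>y. \<bar>y\<bar> * indicator {z. \<bar>z\<bar> > N} y \<partial>\<mu>) \<le> r / (4 * (Bp + 1))"
    using tail[of "r / (4 * (Bp + 1))"] r Bp by auto
  define T where "T y = max (- N) (min N y)" for y :: real
  have pm: "\<psi> \<in> borel_measurable borel" using pc by (rule borel_measurable_continuous_onI)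
  have Tc: "continuous_on UNIV T" unfolding T_def by (intro continuous_intros)
  have TN: "\<bar>T y\<bar> \<le> N" for y unfolding T_def abs_le_iff using N(1) by (auto simp: max_def min_def)
  have Tpc: "continuous_on UNIV (\<lambda>y. T y * \<psi> y)" using Tc pc by (intro continuous_intros)
  have Tpb: "\<bar>T y * \<psi> y\<bar> \<le> N * Bp" for y
    unfolding abs_mult using TN pb Bp N(1) by (intro mult_mono) auto
  have Tpm: "(\<lambda>y. T y * \<psi> y) \<in> borel_measurable borel" using Tpc by (rule borel_measurable_continuous_onI)
  have conv: "(\<lambda>n. \<integral>y. T y * \<psi> y \<partial>\<nu> n) \<longlonglongrightarrow> (\<integral>y. T y * \<psi> y \<partial>\<mu>)"
    by (rule conv_bdd[OF nu mu wc Tpc Tpb])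
  obtain n0 where n0: "\<And>n. n \<ge> n0 \<Longrightarrow> norm ((\<integral>y. T y * \<psi> y \<partial>\<nu> n) - (\<integral>y. T y * \<psi> y \<partial>\<mu>)) < r / 2"
    using LIMSEQ_D[OF conv, of "r/2"] r by auto
  have errb: "\<bar>(\<integral>y. y * \<psi> y \<partial>\<kappa>) - (\<integral>y. T y * \<psi> y \<partial>\<kappa>)\<bar> \<le> r / 4" if la: "\<kappa> \<in> \<Theta>" for \<kappa>
  proof -
    have i1: "integrable \<kappa> (\<lambda>y. y * \<psi> y)" by (rule lin_int[OF la pm pb])
    have i2: "integrable \<kappa> (\<lambda>y. T y * \<psi> y)" by (rule bint(1)[OF la Tpm Tpb])
    have it: "integrable \<kappa> (\<lambda>y. \<bar>y\<bar> * indicator {z. \<bar>z\<bar> > N} y)" and tb: "(\<integral>y. \<bar>y\<bar> * indicator {z. \<bar>z\<bar> > N} y \<partial>\<kappa>) \<le> r / (4 * (Bp + 1))"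
      using N la by auto
    have pw: "\<bar>y * \<psi> y - T y * \<psi> y\<bar> \<le> Bp * (\<bar>y\<bar> * indicator {z. \<bar>z\<bar> > N} y)" for y
      unfolding T_def by (rule pw2[OF trunc_bd[OF N(1)] pb]) (simp add: indicator_def)
    have "\<bar>(\<integral>y. y * \<psi> y \<partial>\<kappa>) - (\<integral>y. T y * \<psi> y \<partial>\<kappa>)\<bar> = \<bar>\<integral>y. y * \<psi> y - T y * \<psi> y \<partial>\<kappa>\<bar>"
      using i1 i2 by simp
    also have "\<dots> \<le> (\<integral>y. Bp * (\<bar>y\<bar> * indicator {z. \<bar>z\<bar> > N} y) \<partial>\<kappa>)"
      using i1 i2 it pw by (intro integral_abs_bound_integral) auto
    also have "\<dots> = Bp * (\<integral>y. \<bar>y\<bar> * indicator {z. \<bar>z\<bar> > N} y \<partial>\<kappa>)" by simp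
    also have "\<dots> \<le> Bp * (r / (4 * (Bp + 1)))" using tb Bp by (intro mult_left_mono) auto
    also have "\<dots> = (r / 4) * (Bp / (Bp + 1))" by simp
    also have "\<dots> \<le> (r / 4) * 1" using Bp r by (intro mult_left_mono) auto
    also have "\<dots> = r / 4" by simp
    finally show ?thesis .
  qed
  show "\<exists>no. \<forall>n\<ge>no. norm ((\<integral>y. y * \<psi> y \<partial>\<nu> n) - (\<integral>y. y * \<psi> y \<partial>\<mu>)) < r"
  proof (intro exI[of _ n0] allI impI)
    fix n assume "n \<ge> n0"
    then have a: "\<bar>(\<integral>y. T y * \<psi> y \<partial>\<nu> n) - (\<integral>y. T y * \<psi> y \<partial>\<mu>)\<bar> < r / 2" using n0 by auto
    have b: "\<bar>(\<integral>y. y * \<psi> y \<partial>\<nu> n) - (\<integral>y. T y * \<psi> y \<partial>\<nu> n)\<bar> \<le> r / 4" using errb nu by auto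
    have c: "\<bar>(\<integral>y. y * \<psi> y \<partial>\<mu>) - (\<integral>y. T y * \<psi> y \<partial>\<mu>)\<bar> \<le> r / 4" using errb mu by auto
    show "norm ((\<integral>y. y * \<psi> y \<partial>\<nu> n) - (\<integral>y. y * \<psi> y \<partial>\<mu>)) < r" using a b c
      by (simp only: real_norm_def abs_less_iff abs_le_iff) linarith
  qed
qed


lemma dk_generic:
  fixes \<Phi> \<Psi> \<psi>a \<psi>b :: "real \<Rightarrow> real \<Rightarrow> real" and S :: "real set" and g :: "real \<Rightarrow> real"
    and C0 Cq A L :: real
  assumes ne: "\<Theta> \<noteq> {}" and wc: "weakly_compact_pm \<Theta>" and S: "open S"
    and \<Phi>c: "\<And>s. s \<in> S \<Longrightarrow> continuous_on UNIV (\<Phi> s)"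
    and \<Phi>b: "\<And>s y. s \<in> S \<Longrightarrow> \<bar>\<Phi> s y\<bar> \<le> C0"
    and \<Psi>d: "\<And>s y. s \<in> S \<Longrightarrow> \<Psi> s y = y * \<psi>a s y + \<psi>b s y"
    and \<psi>c1: "\<And>s. s \<in> S \<Longrightarrow> continuous_on UNIV (\<psi>a s)"
    and \<psi>c2: "\<And>s. s \<in> S \<Longrightarrow> continuous_on UNIV (\<psi>b s)"
    and \<psi>b1: "\<And>s y. s \<in> S \<Longrightarrow> \<bar>\<psi>a s y\<bar> \<le> Cq"
    and \<psi>b2: "\<And>s y. s \<in> S \<Longrightarrow> \<bar>\<psi>b s y\<bar> \<le> Cq"
    and L: "L > 0" and A: "A \<ge> 0"
    and tay: "\<And>s1 s2 y. s1 \<in> S \<Longrightarrow> s2 \<in> S \<Longrightarrow>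
       \<bar>\<Phi> s2 y - \<Phi> s1 y - (s2 - s1) * \<Psi> s1 y\<bar> \<le> \<bar>s2 - s1\<bar> * A * wf (L * \<bar>s2 - s1\<bar>) y"
    and equi: "\<And>s1 s2 y. s1 \<in> S \<Longrightarrow> s2 \<in> S \<Longrightarrow> \<bar>\<Psi> s2 y - \<Psi> s1 y\<bar> \<le> A * wf (L * \<bar>s2 - s1\<bar>) y"
    and g: "\<And>s. g s = (SUP \<mu>\<in>\<Theta>. \<integral>y. \<Phi> s y \<partial>\<mu>)"
  shows "\<exists>B. dk \<Theta> (\<lambda>\<mu> s. \<integral>y. \<Phi> s y \<partial>\<mu>) (\<lambda>\<mu> s. \<integral>y. \<Psi> s y \<partial>\<mu>) S g C0 B"
proof -
  obtain K where K: "K \<ge> 0" "\<forall>\<mu>\<in>\<Theta>. integrable \<mu> (\<lambda>y. y) \<and> integrable \<mu> (\<lambda>y. \<bar>y\<bar>) \<and> (\<integral>y. \<bar>y\<bar> \<partial>\<mu>) \<le> K"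
    using moment by blast
  have Cq: "Cq \<ge> 0" if "s \<in> S" for s using \<psi>b1[OF that, of 0] by linarith
  have \<Phi>m: "\<Phi> s \<in> borel_measurable borel" if "s \<in> S" for s using \<Phi>c[OF that] by (rule borel_measurable_continuous_onI)
  have \<psi>m1: "\<psi>a s \<in> borel_measurable borel" if "s \<in> S" for s using \<psi>c1[OF that] by (rule borel_measurable_continuous_onI)
  have \<psi>m2: "\<psi>b s \<in> borel_measurable borel" if "s \<in> S" for s using \<psi>c2[OF that] by (rule borel_measurable_continuous_onI)
  have \<Psi>eq: "\<Psi> s = (\<lambda>y. y * \<psi>a s y + \<psi>b s y)" if "s \<in> S" for s using \<Psi>d[OF that] by (rule ext)
  have \<Psi>m: "\<Psi> s \<in> borel_measurable borel" if s: "s \<in> S" for s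
  proof -
    have a: "\<psi>a s \<in> borel_measurable borel" "\<psi>b s \<in> borel_measurable borel" using \<psi>m1[OF s] \<psi>m2[OF s] by auto
    have "(\<lambda>y. y * \<psi>a s y + \<psi>b s y) \<in> borel_measurable borel" using a by measurable
    then show ?thesis using \<Psi>eq[OF s] by simp
  qed
  have i1: "integrable \<mu> (\<lambda>y. y * \<psi>a s y)" if "\<mu> \<in> \<Theta>" "s \<in> S" for \<mu> s
    by (rule lin_int[OF that(1) \<psi>m1[OF that(2)] \<psi>b1[OF that(2)]])
  have i2: "integrable \<mu> (\<psi>b s)" if "\<mu> \<in> \<Theta>" "s \<in> S" for \<mu> s
    by (rule bint(1)[OF that(1) \<psi>m2[OF that(2)] \<psi>b2[OF that(2)]])
  have \<Phi>i: "integrable \<mu> (\<Phi> s)" if "\<mu> \<in> \<Theta>" "s \<in> S" for \<mu> s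
    by (rule bint(1)[OF that(1) \<Phi>m[OF that(2)] \<Phi>b[OF that(2)]])
  have \<Psi>i: "integrable \<mu> (\<Psi> s)" if "\<mu> \<in> \<Theta>" "s \<in> S" for \<mu> s
    unfolding \<Psi>eq[OF that(2)] using i1[OF that] i2[OF that] by simp
  have \<Psi>int: "(\<integral>y. \<Psi> s y \<partial>\<mu>) = (\<integral>y. y * \<psi>a s y \<partial>\<mu>) + (\<integral>y. \<psi>b s y \<partial>\<mu>)" if "\<mu> \<in> \<Theta>" "s \<in> S" for \<mu> s
    unfolding \<Psi>eq[OF that(2)] using i1[OF that] i2[OF that] by simp
  have Db: "\<bar>\<integral>y. \<Psi> s y \<partial>\<mu>\<bar> \<le> Cq * K + Cq" if mu: "\<mu> \<in> \<Theta>" and s: "s \<in> S" for \<mu> s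
  proof -
    have ia: "integrable \<mu> (\<lambda>y. Cq * \<bar>y\<bar>)" using K mu by simp
    have "\<bar>\<integral>y. y * \<psi>a s y \<partial>\<mu>\<bar> \<le> (\<integral>y. Cq * \<bar>y\<bar> \<partial>\<mu>)"
    proof (rule integral_abs_bound_integral[OF i1[OF mu s] ia])
      fix y
      have "\<bar>y * \<psi>a s y\<bar> = \<bar>y\<bar> * \<bar>\<psi>a s y\<bar>" by (simp add: abs_mult)
      also have "\<dots> \<le> \<bar>y\<bar> * Cq" using \<psi>b1[OF s] by (intro mult_left_mono) auto
      finally show "\<bar>y * \<psi>a s y\<bar> \<le> Cq * \<bar>y\<bar>" by (simp add: mult.commute)
    qed
    also have "\<dots> = Cq * (\<integral>y. \<bar>y\<bar> \<partial>\<mu>)" by simp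
    also have "\<dots> \<le> Cq * K" using K mu Cq[OF s] by (intro mult_left_mono) auto
    finally have a: "\<bar>\<integral>y. y * \<psi>a s y \<partial>\<mu>\<bar> \<le> Cq * K" .
    have b: "\<bar>\<integral>y. \<psi>b s y \<partial>\<mu>\<bar> \<le> Cq" by (rule bint(2)[OF mu \<psi>m2[OF s] \<psi>b2[OF s]])
    show ?thesis unfolding \<Psi>int[OF mu s] using a b by linarith
  qed
  show ?thesis
  proof (intro exI[of _ "Cq * K + Cq"], unfold_locales)
    show "\<Theta> \<noteq> {}" by (rule ne)
    show "open S" by (rule S)
    show "\<bar>\<integral>y. \<Phi> s y \<partial>\<mu>\<bar> \<le> C0" if "\<mu> \<in> \<Theta>" "s \<in> S" for \<mu> s
      by (rule bint(2)[OF that(1) \<Phi>m[OF that(2)] \<Phi>b[OF that(2)]])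
    show "\<bar>\<integral>y. \<Psi> s y \<partial>\<mu>\<bar> \<le> Cq * K + Cq" if "\<mu> \<in> \<Theta>" "s \<in> S" for \<mu> s
      by (rule Db[OF that])
    show "g s = (SUP \<mu>\<in>\<Theta>. \<integral>y. \<Phi> s y \<partial>\<mu>)" for s by (rule g)
  next
    fix e :: real assume e: "e > 0"
    obtain \<eta> where \<eta>: "\<eta> > 0" and UIe: "\<forall>\<mu>\<in>\<Theta>. \<forall>\<rho> c f. 0 \<le> \<rho> \<and> \<rho> \<le> \<eta> \<and> 0 \<le> c \<and> f \<in> borel_measurable borel \<and>
      (\<forall>y. \<bar>f y\<bar> \<le> c * wf \<rho> y) \<longrightarrow> integrable \<mu> f \<and> \<bar>\<integral>y. f y \<partial>\<mu>\<bar> \<le> c * (e / (A + 1))"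
      using UI[of "e / (A + 1)"] e A by auto
    have AA: "A * (e / (A + 1)) \<le> e" using A e by (simp add: field_simps)
    show "\<exists>d>0. \<forall>\<mu>\<in>\<Theta>. \<forall>s1\<in>S. \<forall>s2\<in>S. \<bar>s2 - s1\<bar> < d \<longrightarrow>
        \<bar>(\<integral>y. \<Phi> s2 y \<partial>\<mu>) - (\<integral>y. \<Phi> s1 y \<partial>\<mu>) - (s2 - s1) * (\<integral>y. \<Psi> s1 y \<partial>\<mu>)\<bar> \<le> e * \<bar>s2 - s1\<bar>"
    proof (intro exI[of _ "\<eta> / L"] conjI ballI impI)
      show "\<eta> / L > 0" using \<eta> L by simp
      fix \<mu> s1 s2 assume mu: "\<mu> \<in> \<Theta>" and s1: "s1 \<in> S" and s2: "s2 \<in> S" and d: "\<bar>s2 - s1\<bar> < \<eta> / L"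
      have \<rho>: "0 \<le> L * \<bar>s2 - s1\<bar>" "L * \<bar>s2 - s1\<bar> \<le> \<eta>" using L d by (auto simp: field_simps)
      have fm: "(\<lambda>y. \<Phi> s2 y - \<Phi> s1 y - (s2 - s1) * \<Psi> s1 y) \<in> borel_measurable borel"
        using \<Phi>m[OF s1] \<Phi>m[OF s2] \<Psi>m[OF s1] by measurable
      have c0: "0 \<le> \<bar>s2 - s1\<bar> * A" using A by simp
      have "\<bar>\<integral>y. \<Phi> s2 y - \<Phi> s1 y - (s2 - s1) * \<Psi> s1 y \<partial>\<mu>\<bar> \<le> \<bar>s2 - s1\<bar> * A * (e / (A + 1))"
        using UIe[rule_format, OF mu, of "L * \<bar>s2 - s1\<bar>" "\<bar>s2 - s1\<bar> * A" "\<lambda>y. \<Phi> s2 y - \<Phi> s1 y - (s2 - s1) * \<Psi> s1 y"]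
          \<rho> c0 fm tay[OF s1 s2] by blast
      also have "\<dots> = \<bar>s2 - s1\<bar> * (A * (e / (A + 1)))" by simp
      also have "\<dots> \<le> \<bar>s2 - s1\<bar> * e" using AA by (intro mult_left_mono) auto
      finally have *: "\<bar>\<integral>y. \<Phi> s2 y - \<Phi> s1 y - (s2 - s1) * \<Psi> s1 y \<partial>\<mu>\<bar> \<le> e * \<bar>s2 - s1\<bar>" by (simp add: mult.commute)
      have "(\<integral>y. \<Phi> s2 y - \<Phi> s1 y - (s2 - s1) * \<Psi> s1 y \<partial>\<mu>) =
          (\<integral>y. \<Phi> s2 y \<partial>\<mu>) - (\<integral>y. \<Phi> s1 y \<partial>\<mu>) - (s2 - s1) * (\<integral>y. \<Psi> s1 y \<partial>\<mu>)"
        using \<Phi>i[OF mu s1] \<Phi>i[OF mu s2] \<Psi>i[OF mu s1] by simp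
      then show "\<bar>(\<integral>y. \<Phi> s2 y \<partial>\<mu>) - (\<integral>y. \<Phi> s1 y \<partial>\<mu>) - (s2 - s1) * (\<integral>y. \<Psi> s1 y \<partial>\<mu>)\<bar> \<le> e * \<bar>s2 - s1\<bar>"
        using * by simp
    qed
  next
    fix e :: real assume e: "e > 0"
    obtain \<eta> where \<eta>: "\<eta> > 0" and UIe: "\<forall>\<mu>\<in>\<Theta>. \<forall>\<rho> c f. 0 \<le> \<rho> \<and> \<rho> \<le> \<eta> \<and> 0 \<le> c \<and> f \<in> borel_measurable borel \<and>
      (\<forall>y. \<bar>f y\<bar> \<le> c * wf \<rho> y) \<longrightarrow> integrable \<mu> f \<and> \<bar>\<integral>y. f y \<partial>\<mu>\<bar> \<le> c * (e / (A + 1))"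
      using UI[of "e / (A + 1)"] e A by auto
    have AA: "A * (e / (A + 1)) \<le> e" using A e by (simp add: field_simps)
    show "\<exists>d>0. \<forall>\<mu>\<in>\<Theta>. \<forall>s1\<in>S. \<forall>s2\<in>S. \<bar>s2 - s1\<bar> < d \<longrightarrow>
        \<bar>(\<integral>y. \<Psi> s2 y \<partial>\<mu>) - (\<integral>y. \<Psi> s1 y \<partial>\<mu>)\<bar> \<le> e"
    proof (intro exI[of _ "\<eta> / L"] conjI ballI impI)
      show "\<eta> / L > 0" using \<eta> L by simp
      fix \<mu> s1 s2 assume mu: "\<mu> \<in> \<Theta>" and s1: "s1 \<in> S" and s2: "s2 \<in> S" and d: "\<bar>s2 - s1\<bar> < \<eta> / L"
      have \<rho>: "0 \<le> L * \<bar>s2 - s1\<bar>" "L * \<bar>s2 - s1\<bar> \<le> \<eta>" using L d by (auto simp: field_simps)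
      have fm: "(\<lambda>y. \<Psi> s2 y - \<Psi> s1 y) \<in> borel_measurable borel"
        using \<Psi>m[OF s1] \<Psi>m[OF s2] by measurable
      have "\<bar>\<integral>y. \<Psi> s2 y - \<Psi> s1 y \<partial>\<mu>\<bar> \<le> A * (e / (A + 1))"
        using UIe[rule_format, OF mu, of "L * \<bar>s2 - s1\<bar>" "A" "\<lambda>y. \<Psi> s2 y - \<Psi> s1 y"]
          \<rho> A fm equi[OF s1 s2] by blast
      also have "\<dots> \<le> e" by (rule AA)
      finally have *: "\<bar>\<integral>y. \<Psi> s2 y - \<Psi> s1 y \<partial>\<mu>\<bar> \<le> e" .
      have "(\<integral>y. \<Psi> s2 y - \<Psi> s1 y \<partial>\<mu>) = (\<integral>y. \<Psi> s2 y \<partial>\<mu>) - (\<integral>y. \<Psi> s1 y \<partial>\<mu>)"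
        using \<Psi>i[OF mu s1] \<Psi>i[OF mu s2] by simp
      then show "\<bar>(\<integral>y. \<Psi> s2 y \<partial>\<mu>) - (\<integral>y. \<Psi> s1 y \<partial>\<mu>)\<bar> \<le> e" using * by simp
    qed
  next
    fix ms :: "nat \<Rightarrow> real measure" assume ms: "\<forall>n. ms n \<in> \<Theta>"
    obtain r \<mu> where r: "strict_mono (r :: nat \<Rightarrow> nat)" and mu: "\<mu> \<in> \<Theta>" and w: "weak_conv_m (ms \<circ> r) \<mu>"
      using wc ms unfolding weakly_compact_pm_def by blast
    have msr: "(ms \<circ> r) n \<in> \<Theta>" for n using ms by simp
    have "(\<lambda>n. \<integral>y. \<Phi> s y \<partial>ms (r n)) \<longlonglongrightarrow> (\<integral>y. \<Phi> s y \<partial>\<mu>) \<and>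
          (\<lambda>n. \<integral>y. \<Psi> s y \<partial>ms (r n)) \<longlonglongrightarrow> (\<integral>y. \<Psi> s y \<partial>\<mu>)" if s: "s \<in> S" for s
    proof
      show "(\<lambda>n. \<integral>y. \<Phi> s y \<partial>ms (r n)) \<longlonglongrightarrow> (\<integral>y. \<Phi> s y \<partial>\<mu>)"
        using conv_bdd[OF msr mu w \<Phi>c[OF s] \<Phi>b[OF s]] by simp
      have a: "(\<lambda>n. \<integral>y. y * \<psi>a s y \<partial>ms (r n)) \<longlonglongrightarrow> (\<integral>y. y * \<psi>a s y \<partial>\<mu>)"
        using conv_lin[OF msr mu w \<psi>c1[OF s] \<psi>b1[OF s]] by simp
      have b: "(\<lambda>n. \<integral>y. \<psi>b s y \<partial>ms (r n)) \<longlonglongrightarrow> (\<integral>y. \<psi>b s y \<partial>\<mu>)"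
        using conv_bdd[OF msr mu w \<psi>c2[OF s] \<psi>b2[OF s]] by simp
      have eq: "(\<lambda>n. \<integral>y. \<Psi> s y \<partial>ms (r n)) = (\<lambda>n. (\<integral>y. y * \<psi>a s y \<partial>ms (r n)) + (\<integral>y. \<psi>b s y \<partial>ms (r n)))"
        using \<Psi>int[OF _ s] ms by auto
      show "(\<lambda>n. \<integral>y. \<Psi> s y \<partial>ms (r n)) \<longlonglongrightarrow> (\<integral>y. \<Psi> s y \<partial>\<mu>)"
        unfolding eq \<Psi>int[OF mu s] by (intro tendsto_add a b)
    qed
    then show "\<exists>(r::nat\<Rightarrow>nat) \<mu>. strict_mono r \<and> \<mu> \<in> \<Theta> \<and>
               (\<forall>s\<in>S. (\<lambda>n. \<integral>y. \<Phi> s y \<partial>ms (r n)) \<longlonglongrightarrow> (\<integral>y. \<Phi> s y \<partial>\<mu>) \<and>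
                        (\<lambda>n. \<integral>y. \<Psi> s y \<partial>ms (r n)) \<longlonglongrightarrow> (\<integral>y. \<Psi> s y \<partial>\<mu>))"
      using r mu by blast
  qed
qed

end

lemma wf_nonneg: "0 \<le> \<rho> \<Longrightarrow> 0 \<le> wf \<rho> y"
  unfolding wf_def by (auto intro!: add_nonneg_nonneg mult_nonneg_nonneg)

lemma wf_mono: "0 \<le> \<rho>1 \<Longrightarrow> \<rho>1 \<le> \<rho>2 \<Longrightarrow> wf \<rho>1 y \<le> wf \<rho>2 y"
  unfolding wf_def
  by (intro add_mono mult_left_mono mult_right_mono min.mono) auto

lemma wf_ge1: "0 \<le> \<rho> \<Longrightarrow> \<bar>y\<bar> * min 1 (\<rho> * \<bar>y\<bar>) \<le> wf \<rho> y"
  unfolding wf_def by auto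

lemma wf_ge2: "0 \<le> \<rho> \<Longrightarrow> \<rho> * \<bar>y\<bar> \<le> wf \<rho> y"
  unfolding wf_def by auto

lemma wf_ge3: "0 \<le> \<rho> \<Longrightarrow> \<rho> \<le> wf \<rho> y"
  unfolding wf_def by auto

lemma min_scale:
  fixes m1 m2 z :: real
  assumes "0 \<le> m1" "0 \<le> m2" "0 \<le> z"
  shows "min m1 (m2 * z) \<le> max m1 m2 * min 1 z"
proof (cases "z \<le> 1")
  case True
  then have "min m1 (m2 * z) \<le> m2 * z" by simp
  also have "\<dots> \<le> max m1 m2 * z" using assms by (intro mult_right_mono) auto
  finally show ?thesis using True by simp
next
  case False
  then show ?thesis by (simp add: min_def max_def)
qed

lemma lip_deriv:
  fixes f f' :: "real \<Rightarrow> real"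
  assumes d: "\<And>x. (f has_real_derivative f' x) (at x)" and b: "\<And>x. \<bar>f' x\<bar> \<le> M"
  shows "\<bar>f b' - f a\<bar> \<le> M * \<bar>b' - a\<bar>"
proof -
  have *: "\<bar>f v - f u\<bar> \<le> M * (v - u)" if uv: "u < v" for u v
  proof -
    obtain z where "f v - f u = (v - u) * f' z" using MVT2[of u v f f'] uv d by blast
    then have "\<bar>f v - f u\<bar> = (v - u) * \<bar>f' z\<bar>" using uv by (simp add: abs_mult)
    also have "\<dots> \<le> (v - u) * M" using b uv by (intro mult_left_mono) auto
    finally show ?thesis by (simp add: mult.commute)
  qed
  consider "a < b'" | "a = b'" | "b' < a" by linarith
  then show ?thesis
  proof cases
    case 1 then show ?thesis using *[OF 1] by simp
  next
    case 2 then show ?thesis by simp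
  next
    case 3 then show ?thesis using *[OF 3] by (simp add: abs_minus_commute)
  qed
qed

lemma taylor1:
  fixes \<phi> \<phi>' \<phi>'' :: "real \<Rightarrow> real"
  assumes d1: "\<And>x. (\<phi> has_real_derivative \<phi>' x) (at x)"
    and d2: "\<And>x. (\<phi>' has_real_derivative \<phi>'' x) (at x)"
    and b1: "\<And>x. \<bar>\<phi>' x\<bar> \<le> M1" and b2: "\<And>x. \<bar>\<phi>'' x\<bar> \<le> M2"
  shows "\<bar>\<phi> (p + q) - \<phi> p - q * \<phi>' p\<bar> \<le> \<bar>q\<bar> * min (2 * M1) (M2 * \<bar>q\<bar>)"
proof -
  have M: "0 \<le> M1" "0 \<le> M2" using b1[of 0] b2[of 0] by linarith+
  have lip': "\<bar>\<phi>' z - \<phi>' p\<bar> \<le> min (2 * M1) (M2 * \<bar>z - p\<bar>)" for z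
  proof -
    have "\<bar>\<phi>' z - \<phi>' p\<bar> \<le> M2 * \<bar>z - p\<bar>" by (rule lip_deriv[OF d2 b2])
    moreover have "\<bar>\<phi>' z - \<phi>' p\<bar> \<le> 2 * M1" using b1[of z] b1[of p] by linarith
    ultimately show ?thesis by simp
  qed
  have key: "\<exists>z. \<bar>z - p\<bar> \<le> \<bar>q\<bar> \<and> \<phi> (p + q) - \<phi> p = q * \<phi>' z"
  proof -
    consider "q > 0" | "q = 0" | "q < 0" by linarith
    then show ?thesis
    proof cases
      case 1
      then obtain z where "p < z" "z < p + q" "\<phi> (p + q) - \<phi> p = (p + q - p) * \<phi>' z"
        using MVT2[of p "p + q" \<phi> \<phi>'] d1 by auto
      then show ?thesis using 1 by (intro exI[of _ z]) auto
    next
      case 2 then show ?thesis by (intro exI[of _ p]) auto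
    next
      case 3
      then obtain z where "p + q < z" "z < p" "\<phi> p - \<phi> (p + q) = (p - (p + q)) * \<phi>' z"
        using MVT2[of "p + q" p \<phi> \<phi>'] d1 by auto
      then show ?thesis using 3 by (intro exI[of _ z]) (auto simp: algebra_simps)
    qed
  qed
  then obtain z where z: "\<bar>z - p\<bar> \<le> \<bar>q\<bar>" "\<phi> (p + q) - \<phi> p = q * \<phi>' z" by blast
  have "\<phi> (p + q) - \<phi> p - q * \<phi>' p = q * (\<phi>' z - \<phi>' p)" using z(2) by (simp add: algebra_simps)
  then have "\<bar>\<phi> (p + q) - \<phi> p - q * \<phi>' p\<bar> = \<bar>q\<bar> * \<bar>\<phi>' z - \<phi>' p\<bar>" by (simp add: abs_mult)
  also have "\<dots> \<le> \<bar>q\<bar> * min (2 * M1) (M2 * \<bar>z - p\<bar>)" by (intro mult_left_mono lip') auto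
  also have "\<dots> \<le> \<bar>q\<bar> * min (2 * M1) (M2 * \<bar>q\<bar>)"
    using z(1) M by (intro mult_left_mono min.mono mult_left_mono) auto
  finally show ?thesis .
qed

lemma sqrt_diff:
  assumes a0: "0 < a0" "a0 \<le> sqrt s1" "a0 \<le> sqrt s2" and s: "0 \<le> s1" "0 \<le> s2"
  shows "\<bar>sqrt s2 - sqrt s1\<bar> \<le> (1 / (2 * a0)) * \<bar>s2 - s1\<bar>"
proof -
  have e: "(sqrt s2 - sqrt s1) * (sqrt s2 + sqrt s1) = s2 - s1"
    using s by (simp add: algebra_simps)
  have p: "2 * a0 \<le> sqrt s2 + sqrt s1" using a0 by simp
  have "\<bar>sqrt s2 - sqrt s1\<bar> * (2 * a0) \<le> \<bar>sqrt s2 - sqrt s1\<bar> * (sqrt s2 + sqrt s1)"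
    using p by (intro mult_left_mono) auto
  also have "\<dots> = \<bar>s2 - s1\<bar>" using e[symmetric] a0 by (simp add: abs_mult)
  finally show ?thesis using a0 by (simp add: field_simps)
qed


lemma tay_t:
  fixes \<phi> \<phi>' :: "real \<Rightarrow> real" and a b a0 x y M1 M2 :: real
  assumes tl: "\<And>p q. \<bar>\<phi> (p + q) - \<phi> p - q * \<phi>' p\<bar> \<le> \<bar>q\<bar> * min (2 * M1) (M2 * \<bar>q\<bar>)"
    and b1: "\<And>z. \<bar>\<phi>' z\<bar> \<le> M1" and M: "0 \<le> M1" "0 \<le> M2"
    and a: "0 < a0" "a0 \<le> a"
  shows "\<bar>\<phi> (x + b * y) - \<phi> (x + a * y) - (b^2 - a^2) * (y / (2 * a) * \<phi>' (x + a * y))\<bar>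
          \<le> \<bar>b - a\<bar> * (max (2 * M1) M2 + M1 / (2 * a0)) * wf \<bar>b - a\<bar> y"
proof -
  define p where "p = x + a * y"
  define q where "q = (b - a) * y"
  define h where "h = \<bar>b - a\<bar>"
  define Am where "Am = max (2 * M1) M2"
  have h0: "0 \<le> h" by (simp add: h_def)
  have Am0: "0 \<le> Am" using M by (simp add: Am_def)
  have pq: "x + b * y = p + q" by (simp add: p_def q_def algebra_simps)
  have an: "a \<noteq> 0" using a by simp
  have sp: "\<phi> (x + b * y) - \<phi> (x + a * y) - (b^2 - a^2) * (y / (2 * a) * \<phi>' (x + a * y))
      = (\<phi> (p + q) - \<phi> p - q * \<phi>' p) + (- ((b - a)^2 * y / (2 * a)) * \<phi>' p)"
    unfolding pq[symmetric] using an by (simp add: p_def q_def field_simps power2_eq_square)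
  have aq: "\<bar>q\<bar> = h * \<bar>y\<bar>" by (simp add: q_def h_def abs_mult)
  have t1: "\<bar>\<phi> (p + q) - \<phi> p - q * \<phi>' p\<bar> \<le> h * (Am * (\<bar>y\<bar> * min 1 (h * \<bar>y\<bar>)))"
  proof -
    have "\<bar>\<phi> (p + q) - \<phi> p - q * \<phi>' p\<bar> \<le> \<bar>q\<bar> * min (2 * M1) (M2 * \<bar>q\<bar>)" by (rule tl)
    also have "\<dots> \<le> \<bar>q\<bar> * (Am * min 1 \<bar>q\<bar>)" unfolding Am_def using M
      by (intro mult_left_mono min_scale) auto
    also have "\<dots> = h * (Am * (\<bar>y\<bar> * min 1 (h * \<bar>y\<bar>)))" unfolding aq by (simp add: algebra_simps)
    finally show ?thesis .
  qed
  have t2: "\<bar>(- ((b - a)^2 * y / (2 * a)) * \<phi>' p)\<bar> \<le> h * (M1 / (2 * a0) * (h * \<bar>y\<bar>))"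
  proof -
    have "\<bar>(- ((b - a)^2 * y / (2 * a)) * \<phi>' p)\<bar> = (h * h * \<bar>y\<bar>) * (1 / (2 * a)) * \<bar>\<phi>' p\<bar>"
      using a by (simp add: abs_mult h_def power2_eq_square)
    also have "\<dots> \<le> (h * h * \<bar>y\<bar>) * (1 / (2 * a0)) * M1"
      using a b1[of p] h0 M by (intro mult_mono) (auto simp: frac_le)
    also have "\<dots> = h * (M1 / (2 * a0) * (h * \<bar>y\<bar>))" by (simp add: algebra_simps)
    finally show ?thesis .
  qed
  have "\<bar>\<phi> (x + b * y) - \<phi> (x + a * y) - (b^2 - a^2) * (y / (2 * a) * \<phi>' (x + a * y))\<bar>
      \<le> h * (Am * (\<bar>y\<bar> * min 1 (h * \<bar>y\<bar>))) + h * (M1 / (2 * a0) * (h * \<bar>y\<bar>))"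
    unfolding sp by (rule order_trans[OF abs_triangle_ineq add_mono[OF t1 t2]])
  also have "\<dots> \<le> h * (Am * wf h y) + h * (M1 / (2 * a0) * wf h y)"
    using h0 Am0 M a wf_ge1[OF h0, of y] wf_ge2[OF h0, of y]
    by (intro add_mono mult_left_mono) auto
  also have "\<dots> = h * (Am + M1 / (2 * a0)) * wf h y" by (simp add: algebra_simps)
  finally show ?thesis unfolding h_def Am_def .
qed

lemma equi_t:
  fixes \<phi>' :: "real \<Rightarrow> real" and a b a0 x y M1 M2 :: real
  assumes lp: "\<And>p q. \<bar>\<phi>' p - \<phi>' q\<bar> \<le> min (2 * M1) (M2 * \<bar>p - q\<bar>)"
    and b1: "\<And>z. \<bar>\<phi>' z\<bar> \<le> M1" and M: "0 \<le> M1" "0 \<le> M2"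
    and a: "0 < a0" "a0 \<le> a" "a0 \<le> b"
  shows "\<bar>y / (2 * b) * \<phi>' (x + b * y) - y / (2 * a) * \<phi>' (x + a * y)\<bar>
          \<le> (max (2 * M1) M2 / (2 * a0) + M1 / (2 * a0^2)) * wf \<bar>b - a\<bar> y"
proof -
  define h where "h = \<bar>b - a\<bar>"
  define Am where "Am = max (2 * M1) M2"
  have h0: "0 \<le> h" by (simp add: h_def)
  have Am0: "0 \<le> Am" using M by (simp add: Am_def)
  have an: "a > 0" "b > 0" using a by auto
  have sp: "y / (2 * b) * \<phi>' (x + b * y) - y / (2 * a) * \<phi>' (x + a * y)
     = (y / (2 * b)) * (\<phi>' (x + b * y) - \<phi>' (x + a * y)) + (y * \<phi>' (x + a * y)) * ((a - b) / (2 * a * b))"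
    using an by (simp add: field_simps)
  have t1: "\<bar>(y / (2 * b)) * (\<phi>' (x + b * y) - \<phi>' (x + a * y))\<bar> \<le> Am / (2 * a0) * (\<bar>y\<bar> * min 1 (h * \<bar>y\<bar>))"
  proof -
    have "\<bar>\<phi>' (x + b * y) - \<phi>' (x + a * y)\<bar> \<le> min (2 * M1) (M2 * (h * \<bar>y\<bar>))"
    proof -
      have "x + b * y - (x + a * y) = (b - a) * y" by (simp add: algebra_simps)
      then have "\<bar>x + b * y - (x + a * y)\<bar> = h * \<bar>y\<bar>" by (simp add: h_def abs_mult)
      then show ?thesis using lp[of "x + b * y" "x + a * y"] by simp
    qed
    also have "\<dots> \<le> Am * min 1 (h * \<bar>y\<bar>)" unfolding Am_def using M h0 by (intro min_scale) auto
    finally have c: "\<bar>\<phi>' (x + b * y) - \<phi>' (x + a * y)\<bar> \<le> Am * min 1 (h * \<bar>y\<bar>)" .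
    have "\<bar>(y / (2 * b)) * (\<phi>' (x + b * y) - \<phi>' (x + a * y))\<bar> = \<bar>y\<bar> * (1 / (2 * b)) * \<bar>\<phi>' (x + b * y) - \<phi>' (x + a * y)\<bar>"
      using an by (simp add: abs_mult)
    also have "\<dots> \<le> \<bar>y\<bar> * (1 / (2 * a0)) * (Am * min 1 (h * \<bar>y\<bar>))"
      using a c by (intro mult_mono) (auto simp: frac_le)
    also have "\<dots> = Am / (2 * a0) * (\<bar>y\<bar> * min 1 (h * \<bar>y\<bar>))" by simp
    finally show ?thesis .
  qed
  have t2: "\<bar>(y * \<phi>' (x + a * y)) * ((a - b) / (2 * a * b))\<bar> \<le> M1 / (2 * a0^2) * (h * \<bar>y\<bar>)"
  proof -
    have ab: "a0^2 \<le> a * b" using a by (simp add: power2_eq_square mult_mono)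
    have "\<bar>(y * \<phi>' (x + a * y)) * ((a - b) / (2 * a * b))\<bar> = (\<bar>y\<bar> * \<bar>\<phi>' (x + a * y)\<bar>) * (h * (1 / (2 * (a * b))))"
      using an by (simp add: abs_mult h_def abs_minus_commute)
    also have "\<dots> \<le> (\<bar>y\<bar> * M1) * (h * (1 / (2 * a0^2)))"
      using a ab b1 h0 M by (intro mult_mono) (auto simp: frac_le)
    also have "\<dots> = M1 / (2 * a0^2) * (h * \<bar>y\<bar>)" by simp
    finally show ?thesis .
  qed
  have "\<bar>y / (2 * b) * \<phi>' (x + b * y) - y / (2 * a) * \<phi>' (x + a * y)\<bar>
      \<le> Am / (2 * a0) * (\<bar>y\<bar> * min 1 (h * \<bar>y\<bar>)) + M1 / (2 * a0^2) * (h * \<bar>y\<bar>)"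
    unfolding sp by (rule order_trans[OF abs_triangle_ineq add_mono[OF t1 t2]])
  also have "\<dots> \<le> Am / (2 * a0) * wf h y + M1 / (2 * a0^2) * wf h y"
    using h0 Am0 M a wf_ge1[OF h0, of y] wf_ge2[OF h0, of y]
    by (intro add_mono mult_left_mono) auto
  also have "\<dots> = (Am / (2 * a0) + M1 / (2 * a0^2)) * wf h y" by (simp add: algebra_simps)
  finally show ?thesis unfolding h_def Am_def .
qed


lemma cont_aff:
  fixes f :: "real \<Rightarrow> real"
  assumes "\<And>z. isCont f z"
  shows "continuous_on UNIV (\<lambda>y. f (c + d * y))"
proof (rule continuous_at_imp_continuous_on, intro ballI)
  fix y :: real
  have "isCont (\<lambda>y. c + d * y) y" by (intro continuous_intros)
  then show "isCont (\<lambda>y. f (c + d * y)) y" using assms by (rule isCont_o2)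
qed

context thetaF
begin

lemma inst_t:
  fixes \<phi> \<phi>' \<phi>'' :: "real \<Rightarrow> real" and u :: "real \<Rightarrow> real \<Rightarrow> real" and t x M0 M1 M2 :: real
  assumes ne: "\<Theta> \<noteq> {}" and wc: "weakly_compact_pm \<Theta>"
    and d1: "\<And>x. (\<phi> has_real_derivative \<phi>' x) (at x)"
    and d2: "\<And>x. (\<phi>' has_real_derivative \<phi>'' x) (at x)"
    and b0: "\<And>z. \<bar>\<phi> z\<bar> \<le> M0" and b1: "\<And>z. \<bar>\<phi>' z\<bar> \<le> M1" and b2: "\<And>z. \<bar>\<phi>'' z\<bar> \<le> M2"
    and u_def: "\<And>t x. u t x = (SUP \<mu>\<in>\<Theta>. \<integral>y. \<phi> (x + sqrt t * y) \<partial>\<mu>)"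
    and t: "t > 0"
  shows "\<exists>B. dk \<Theta> (\<lambda>\<mu> s. \<integral>y. \<phi> (x + sqrt s * y) \<partial>\<mu>) (\<lambda>\<mu> s. \<integral>y. y / (2 * sqrt s) * \<phi>' (x + sqrt s * y) \<partial>\<mu>)
           {t/2<..<2*t} (\<lambda>s. u s x) M0 B"
proof -
  have M: "0 \<le> M1" "0 \<le> M2" using b1[of 0] b2[of 0] by linarith+
  define a0 where "a0 = sqrt (t / 2)"
  have a0: "0 < a0" using t by (simp add: a0_def)
  have sq: "a0 \<le> sqrt s" "0 \<le> s" "sqrt s > 0" if "s \<in> {t/2<..<2*t}" for s
    using that t a0 by (auto simp: a0_def)
  define L where "L = 1 / (2 * a0)"
  have L: "L > 0" using a0 by (simp add: L_def)
  define A0 where "A0 = max (2 * M1) M2 + M1 / (2 * a0)"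
  define A' where "A' = max (2 * M1) M2 / (2 * a0) + M1 / (2 * a0^2)"
  have A0: "0 \<le> A0" using M a0 by (simp add: A0_def)
  have A': "0 \<le> A'" using M a0 by (simp add: A'_def)
  have ic: "\<And>z. isCont \<phi> z" "\<And>z. isCont \<phi>' z" using d1 d2 by (auto intro: DERIV_isCont)
  have tl: "\<bar>\<phi> (p + q) - \<phi> p - q * \<phi>' p\<bar> \<le> \<bar>q\<bar> * min (2 * M1) (M2 * \<bar>q\<bar>)" for p q
    by (rule taylor1[OF d1 d2 b1 b2])
  have lp: "\<bar>\<phi>' p - \<phi>' q\<bar> \<le> min (2 * M1) (M2 * \<bar>p - q\<bar>)" for p q
  proof -
    have "\<bar>\<phi>' p - \<phi>' q\<bar> \<le> M2 * \<bar>p - q\<bar>" by (rule lip_deriv[OF d2 b2])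
    moreover have "\<bar>\<phi>' p - \<phi>' q\<bar> \<le> 2 * M1" using b1[of p] b1[of q] by linarith
    ultimately show ?thesis by simp
  qed
  have hb: "\<bar>sqrt s2 - sqrt s1\<bar> \<le> L * \<bar>s2 - s1\<bar>" if "s1 \<in> {t/2<..<2*t}" "s2 \<in> {t/2<..<2*t}" for s1 s2
    unfolding L_def using sqrt_diff[OF a0 sq(1)[OF that(1)] sq(1)[OF that(2)] sq(2)[OF that(1)] sq(2)[OF that(2)]] .
  show ?thesis
  proof (rule dk_generic[where \<Phi>="\<lambda>s y. \<phi> (x + sqrt s * y)" and \<Psi>="\<lambda>s y. y / (2 * sqrt s) * \<phi>' (x + sqrt s * y)"
        and \<psi>a="\<lambda>s y. (1 / (2 * sqrt s)) * \<phi>' (x + sqrt s * y)" and \<psi>b="\<lambda>s y. 0"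
        and Cq="M1 / (2 * a0)" and A="L * A0 + A'" and L=L])
    show "\<Theta> \<noteq> {}" by (rule ne)
    show "weakly_compact_pm \<Theta>" by (rule wc)
    show "open {t/2<..<2*t}" by simp
    show "continuous_on UNIV (\<lambda>y. \<phi> (x + sqrt s * y))" for s by (rule cont_aff[OF ic(1)])
    show "\<bar>\<phi> (x + sqrt s * y)\<bar> \<le> M0" for s y by (rule b0)
    show "y / (2 * sqrt s) * \<phi>' (x + sqrt s * y) = y * (1 / (2 * sqrt s) * \<phi>' (x + sqrt s * y)) + 0" for s y
      by simp
    show "continuous_on UNIV (\<lambda>y. 1 / (2 * sqrt s) * \<phi>' (x + sqrt s * y))" for s
      using cont_aff[OF ic(2), of x "sqrt s"] by (intro continuous_intros)
    show "continuous_on UNIV (\<lambda>y. 0::real)" for s :: real by simp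
    show "\<bar>1 / (2 * sqrt s) * \<phi>' (x + sqrt s * y)\<bar> \<le> M1 / (2 * a0)" if s: "s \<in> {t/2<..<2*t}" for s y
    proof -
      have "\<bar>1 / (2 * sqrt s) * \<phi>' (x + sqrt s * y)\<bar> = (1 / (2 * sqrt s)) * \<bar>\<phi>' (x + sqrt s * y)\<bar>"
        using sq[OF s] by (simp add: abs_mult)
      also have "\<dots> \<le> (1 / (2 * a0)) * M1" using sq[OF s] a0 b1 by (intro mult_mono) (auto simp: frac_le)
      finally show ?thesis by simp
    qed
    show "\<bar>0::real\<bar> \<le> M1 / (2 * a0)" for s :: real using M a0 by simp
    show "L > 0" by (rule L)
    show "0 \<le> L * A0 + A'" using L A0 A' by simp
    show "\<bar>\<phi> (x + sqrt s2 * y) - \<phi> (x + sqrt s1 * y) - (s2 - s1) * (y / (2 * sqrt s1) * \<phi>' (x + sqrt s1 * y))\<bar>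
        \<le> \<bar>s2 - s1\<bar> * (L * A0 + A') * wf (L * \<bar>s2 - s1\<bar>) y"
      if s1: "s1 \<in> {t/2<..<2*t}" and s2: "s2 \<in> {t/2<..<2*t}" for s1 s2 y
    proof -
      have e: "(sqrt s2)^2 - (sqrt s1)^2 = s2 - s1" using sq(2)[OF s1] sq(2)[OF s2] by simp
      have "\<bar>\<phi> (x + sqrt s2 * y) - \<phi> (x + sqrt s1 * y) - ((sqrt s2)^2 - (sqrt s1)^2) * (y / (2 * sqrt s1) * \<phi>' (x + sqrt s1 * y))\<bar>
          \<le> \<bar>sqrt s2 - sqrt s1\<bar> * A0 * wf \<bar>sqrt s2 - sqrt s1\<bar> y"
        unfolding A0_def by (rule tay_t[OF tl b1 M a0 sq(1)[OF s1]])
      also have "\<dots> \<le> (L * \<bar>s2 - s1\<bar>) * A0 * wf (L * \<bar>s2 - s1\<bar>) y"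
        using hb[OF s1 s2] A0 wf_mono[of "\<bar>sqrt s2 - sqrt s1\<bar>" "L * \<bar>s2 - s1\<bar>" y] wf_nonneg[of "\<bar>sqrt s2 - sqrt s1\<bar>" y]
        by (intro mult_mono) auto
      also have "\<dots> = \<bar>s2 - s1\<bar> * (L * A0) * wf (L * \<bar>s2 - s1\<bar>) y" by simp
      also have "\<dots> \<le> \<bar>s2 - s1\<bar> * (L * A0 + A') * wf (L * \<bar>s2 - s1\<bar>) y"
        using A' L wf_nonneg[of "L * \<bar>s2 - s1\<bar>" y] by (intro mult_right_mono mult_left_mono) auto
      finally show ?thesis unfolding e .
    qed
    show "\<bar>y / (2 * sqrt s2) * \<phi>' (x + sqrt s2 * y) - y / (2 * sqrt s1) * \<phi>' (x + sqrt s1 * y)\<bar>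
        \<le> (L * A0 + A') * wf (L * \<bar>s2 - s1\<bar>) y"
      if s1: "s1 \<in> {t/2<..<2*t}" and s2: "s2 \<in> {t/2<..<2*t}" for s1 s2 y
    proof -
      have "\<bar>y / (2 * sqrt s2) * \<phi>' (x + sqrt s2 * y) - y / (2 * sqrt s1) * \<phi>' (x + sqrt s1 * y)\<bar>
          \<le> A' * wf \<bar>sqrt s2 - sqrt s1\<bar> y"
        unfolding A'_def by (rule equi_t[OF lp b1 M a0 sq(1)[OF s1] sq(1)[OF s2]])
      also have "\<dots> \<le> A' * wf (L * \<bar>s2 - s1\<bar>) y"
        using hb[OF s1 s2] A' by (intro mult_left_mono wf_mono) auto
      also have "\<dots> \<le> (L * A0 + A') * wf (L * \<bar>s2 - s1\<bar>) y"
        using A0 L wf_nonneg[of "L * \<bar>s2 - s1\<bar>" y] by (intro mult_right_mono) auto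
      finally show ?thesis .
    qed
    show "u s x = (SUP \<mu>\<in>\<Theta>. \<integral>y. \<phi> (x + sqrt s * y) \<partial>\<mu>)" for s by (rule u_def)
  qed
qed

lemma inst_x:
  fixes \<phi> \<phi>' \<phi>'' :: "real \<Rightarrow> real" and u :: "real \<Rightarrow> real \<Rightarrow> real" and t M0 M1 M2 :: real
  assumes ne: "\<Theta> \<noteq> {}" and wc: "weakly_compact_pm \<Theta>"
    and d1: "\<And>x. (\<phi> has_real_derivative \<phi>' x) (at x)"
    and d2: "\<And>x. (\<phi>' has_real_derivative \<phi>'' x) (at x)"
    and b0: "\<And>z. \<bar>\<phi> z\<bar> \<le> M0" and b1: "\<And>z. \<bar>\<phi>' z\<bar> \<le> M1" and b2: "\<And>z. \<bar>\<phi>'' z\<bar> \<le> M2"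
    and u_def: "\<And>t x. u t x = (SUP \<mu>\<in>\<Theta>. \<integral>y. \<phi> (x + sqrt t * y) \<partial>\<mu>)"
  shows "\<exists>B. dk \<Theta> (\<lambda>\<mu> z. \<integral>y. \<phi> (z + sqrt t * y) \<partial>\<mu>) (\<lambda>\<mu> z. \<integral>y. \<phi>' (z + sqrt t * y) \<partial>\<mu>)
           UNIV (\<lambda>z. u t z) M0 B"
proof -
  have M: "0 \<le> M1" "0 \<le> M2" using b1[of 0] b2[of 0] by linarith+
  have ic: "\<And>z. isCont \<phi> z" "\<And>z. isCont \<phi>' z" using d1 d2 by (auto intro: DERIV_isCont)
  show ?thesis
  proof (rule dk_generic[where \<Phi>="\<lambda>z y. \<phi> (z + sqrt t * y)" and \<Psi>="\<lambda>z y. \<phi>' (z + sqrt t * y)"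
        and \<psi>a="\<lambda>s y. 0" and \<psi>b="\<lambda>z y. \<phi>' (z + sqrt t * y)"
        and Cq="M1" and A="M2" and L=1])
    show "\<Theta> \<noteq> {}" by (rule ne)
    show "weakly_compact_pm \<Theta>" by (rule wc)
    show "open (UNIV :: real set)" by simp
    show "continuous_on UNIV (\<lambda>y. \<phi> (s + sqrt t * y))" for s by (rule cont_aff[OF ic(1)])
    show "\<bar>\<phi> (s + sqrt t * y)\<bar> \<le> M0" for s y by (rule b0)
    show "\<phi>' (s + sqrt t * y) = y * 0 + \<phi>' (s + sqrt t * y)" for s y by simp
    show "continuous_on UNIV (\<lambda>y. 0::real)" for s :: real by simp
    show "continuous_on UNIV (\<lambda>y. \<phi>' (s + sqrt t * y))" for s by (rule cont_aff[OF ic(2)])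
    show "\<bar>0::real\<bar> \<le> M1" for s :: real using M by simp
    show "\<bar>\<phi>' (s + sqrt t * y)\<bar> \<le> M1" for s y by (rule b1)
    show "(0::real) < 1" by simp
    show "0 \<le> M2" by (rule M(2))
    show "\<bar>\<phi> (s2 + sqrt t * y) - \<phi> (s1 + sqrt t * y) - (s2 - s1) * \<phi>' (s1 + sqrt t * y)\<bar>
        \<le> \<bar>s2 - s1\<bar> * M2 * wf (1 * \<bar>s2 - s1\<bar>) y" for s1 s2 y
    proof -
      have e: "s1 + sqrt t * y + (s2 - s1) = s2 + sqrt t * y" by simp
      have "\<bar>\<phi> (s2 + sqrt t * y) - \<phi> (s1 + sqrt t * y) - (s2 - s1) * \<phi>' (s1 + sqrt t * y)\<bar>
          \<le> \<bar>s2 - s1\<bar> * min (2 * M1) (M2 * \<bar>s2 - s1\<bar>)"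
        using taylor1[OF d1 d2 b1 b2, of "s1 + sqrt t * y" "s2 - s1"] unfolding e .
      also have "\<dots> \<le> \<bar>s2 - s1\<bar> * (M2 * \<bar>s2 - s1\<bar>)" by (intro mult_left_mono) auto
      also have "\<dots> \<le> \<bar>s2 - s1\<bar> * (M2 * wf (1 * \<bar>s2 - s1\<bar>) y)"
        using wf_ge3[of "\<bar>s2 - s1\<bar>" y] M by (intro mult_left_mono) auto
      finally show ?thesis by simp
    qed
    show "\<bar>\<phi>' (s2 + sqrt t * y) - \<phi>' (s1 + sqrt t * y)\<bar> \<le> M2 * wf (1 * \<bar>s2 - s1\<bar>) y" for s1 s2 y
    proof -
      have "\<bar>\<phi>' (s2 + sqrt t * y) - \<phi>' (s1 + sqrt t * y)\<bar> \<le> M2 * \<bar>(s2 + sqrt t * y) - (s1 + sqrt t * y)\<bar>"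
        by (rule lip_deriv[OF d2 b2])
      also have "\<dots> = M2 * \<bar>s2 - s1\<bar>" by simp
      also have "\<dots> \<le> M2 * wf (1 * \<bar>s2 - s1\<bar>) y" using wf_ge3[of "\<bar>s2 - s1\<bar>" y] M by (intro mult_left_mono) auto
      finally show ?thesis .
    qed
    show "u t s = (SUP \<mu>\<in>\<Theta>. \<integral>y. \<phi> (s + sqrt t * y) \<partial>\<mu>)" for s by (rule u_def)
  qed
qed

end


theorem lemma2p1:
  fixes \<Theta> :: "real measure set"
    and \<phi> \<phi>' \<phi>'' :: "real \<Rightarrow> real"
    and u :: "real \<Rightarrow> real \<Rightarrow> real"
  assumes prob: "\<And>\<mu>. \<mu> \<in> \<Theta> \<Longrightarrow> prob_space \<mu> \<and> sets \<mu> = sets borel"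
    and nonempty: "\<Theta> \<noteq> {}"
    and wcompact: "weakly_compact_pm \<Theta>"
    and unif_int: "((\<lambda>N. SUP \<mu>\<in>\<Theta>. \<integral>\<^sup>+ y. ennreal (\<bar>y\<bar> * indicator {z. \<bar>z\<bar> > N} y) \<partial>\<mu>)
                     \<longlongrightarrow> 0) at_top"
    and d1: "\<And>x. (\<phi> has_real_derivative \<phi>' x) (at x)"
    and d2: "\<And>x. (\<phi>' has_real_derivative \<phi>'' x) (at x)"
    and cont2: "continuous_on UNIV \<phi>''"
    and bdd: "bounded (range \<phi>)" "bounded (range \<phi>')" "bounded (range \<phi>'')"
    and u_def: "\<And>t x. u t x = (SUP \<mu>\<in>\<Theta>. \<integral>y. \<phi> (x + sqrt t * y) \<partial>\<mu>)"
  shows "\<forall>t>0. \<forall>x.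
     let \<Theta>tx = {\<mu>\<in>\<Theta>. (\<integral>y. \<phi> (x + sqrt t * y) \<partial>\<mu>) = u t x} in
     ((\<lambda>h. (u (t + h) x - u t x) / h) \<longlongrightarrow>
        (SUP \<mu>\<in>\<Theta>tx. \<integral>y. y / (2 * sqrt t) * \<phi>' (x + sqrt t * y) \<partial>\<mu>)) (at_right 0) \<and>
     ((\<lambda>h. (u (t - h) x - u t x) / (- h)) \<longlongrightarrow>
        (INF \<mu>\<in>\<Theta>tx. \<integral>y. y / (2 * sqrt t) * \<phi>' (x + sqrt t * y) \<partial>\<mu>)) (at_right 0) \<and>
     ((\<lambda>h. (u t (x + h) - u t x) / h) \<longlongrightarrow>
        (SUP \<mu>\<in>\<Theta>tx. \<integral>y. \<phi>' (x + sqrt t * y) \<partial>\<mu>)) (at_right 0) \<and>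
     ((\<lambda>h. (u t (x - h) - u t x) / (- h)) \<longlongrightarrow>
        (INF \<mu>\<in>\<Theta>tx. \<integral>y. \<phi>' (x + sqrt t * y) \<partial>\<mu>)) (at_right 0) \<and>
     ((\<lambda>\<delta>. rderiv (\<lambda>s. u s x) (t + \<delta>)) \<longlongrightarrow> rderiv (\<lambda>s. u s x) t) (at_right 0) \<and>
     ((\<lambda>\<delta>. lderiv (\<lambda>s. u s x) (t + \<delta>)) \<longlongrightarrow> rderiv (\<lambda>s. u s x) t) (at_right 0) \<and>
     ((\<lambda>\<delta>. rderiv (\<lambda>s. u s x) (t - \<delta>)) \<longlongrightarrow> lderiv (\<lambda>s. u s x) t) (at_right 0) \<and>
     ((\<lambda>\<delta>. lderiv (\<lambda>s. u s x) (t - \<delta>)) \<longlongrightarrow> lderiv (\<lambda>s. u s x) t) (at_right 0) \<and>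
     ((\<lambda>\<delta>. rderiv (\<lambda>z. u t z) (x + \<delta>)) \<longlongrightarrow> rderiv (\<lambda>z. u t z) x) (at_right 0) \<and>
     ((\<lambda>\<delta>. lderiv (\<lambda>z. u t z) (x + \<delta>)) \<longlongrightarrow> rderiv (\<lambda>z. u t z) x) (at_right 0) \<and>
     ((\<lambda>\<delta>. rderiv (\<lambda>z. u t z) (x - \<delta>)) \<longlongrightarrow> lderiv (\<lambda>z. u t z) x) (at_right 0) \<and>
     ((\<lambda>\<delta>. lderiv (\<lambda>z. u t z) (x - \<delta>)) \<longlongrightarrow> lderiv (\<lambda>z. u t z) x) (at_right 0)"
  proof -
  interpret thetaF \<Theta> using prob unif_int by unfold_locales auto
  obtain M0 where b0: "\<And>z. \<bar>\<phi> z\<bar> \<le> M0" using bdd(1) unfolding bounded_iff by auto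
  obtain M1 where b1: "\<And>z. \<bar>\<phi>' z\<bar> \<le> M1" using bdd(2) unfolding bounded_iff by auto
  obtain M2 where b2: "\<And>z. \<bar>\<phi>'' z\<bar> \<le> M2" using bdd(3) unfolding bounded_iff by auto
  show ?thesis
  proof (intro allI impI)
    fix t x :: real assume t: "t > 0"
    obtain B1 where dT: "dk \<Theta> (\<lambda>\<mu> s. \<integral>y. \<phi> (x + sqrt s * y) \<partial>\<mu>) (\<lambda>\<mu> s. \<integral>y. y / (2 * sqrt s) * \<phi>' (x + sqrt s * y) \<partial>\<mu>)
           {t/2<..<2*t} (\<lambda>s. u s x) M0 B1"
      using inst_t[OF nonempty wcompact d1 d2 b0 b1 b2 u_def t] by blast
    obtain B2 where dX: "dk \<Theta> (\<lambda>\<mu> z. \<integral>y. \<phi> (z + sqrt t * y) \<partial>\<mu>) (\<lambda>\<mu> z. \<integral>y. \<phi>' (z + sqrt t * y) \<partial>\<mu>)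
           UNIV (\<lambda>z. u t z) M0 B2"
      using inst_x[OF nonempty wcompact d1 d2 b0 b1 b2 u_def] by blast
    have tS: "t \<in> {t/2<..<2*t}" using t by auto
    note A = dk.main_dk[OF dT tS]
    note X = dk.main_dk[OF dX UNIV_I, of x]
    show "let \<Theta>tx = {\<mu>\<in>\<Theta>. (\<integral>y. \<phi> (x + sqrt t * y) \<partial>\<mu>) = u t x} in
     ((\<lambda>h. (u (t + h) x - u t x) / h) \<longlongrightarrow>
        (SUP \<mu>\<in>\<Theta>tx. \<integral>y. y / (2 * sqrt t) * \<phi>' (x + sqrt t * y) \<partial>\<mu>)) (at_right 0) \<and>
     ((\<lambda>h. (u (t - h) x - u t x) / (- h)) \<longlongrightarrow>
        (INF \<mu>\<in>\<Theta>tx. \<integral>y. y / (2 * sqrt t) * \<phi>' (x + sqrt t * y) \<partial>\<mu>)) (at_right 0) \<and>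
     ((\<lambda>h. (u t (x + h) - u t x) / h) \<longlongrightarrow>
        (SUP \<mu>\<in>\<Theta>tx. \<integral>y. \<phi>' (x + sqrt t * y) \<partial>\<mu>)) (at_right 0) \<and>
     ((\<lambda>h. (u t (x - h) - u t x) / (- h)) \<longlongrightarrow>
        (INF \<mu>\<in>\<Theta>tx. \<integral>y. \<phi>' (x + sqrt t * y) \<partial>\<mu>)) (at_right 0) \<and>
     ((\<lambda>\<delta>. rderiv (\<lambda>s. u s x) (t + \<delta>)) \<longlongrightarrow> rderiv (\<lambda>s. u s x) t) (at_right 0) \<and>
     ((\<lambda>\<delta>. lderiv (\<lambda>s. u s x) (t + \<delta>)) \<longlongrightarrow> rderiv (\<lambda>s. u s x) t) (at_right 0) \<and>
     ((\<lambda>\<delta>. rderiv (\<lambda>s. u s x) (t - \<delta>)) \<longlongrightarrow> lderiv (\<lambda>s. u s x) t) (at_right 0) \<and>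
     ((\<lambda>\<delta>. lderiv (\<lambda>s. u s x) (t - \<delta>)) \<longlongrightarrow> lderiv (\<lambda>s. u s x) t) (at_right 0) \<and>
     ((\<lambda>\<delta>. rderiv (\<lambda>z. u t z) (x + \<delta>)) \<longlongrightarrow> rderiv (\<lambda>z. u t z) x) (at_right 0) \<and>
     ((\<lambda>\<delta>. lderiv (\<lambda>z. u t z) (x + \<delta>)) \<longlongrightarrow> rderiv (\<lambda>z. u t z) x) (at_right 0) \<and>
     ((\<lambda>\<delta>. rderiv (\<lambda>z. u t z) (x - \<delta>)) \<longlongrightarrow> lderiv (\<lambda>z. u t z) x) (at_right 0) \<and>
     ((\<lambda>\<delta>. lderiv (\<lambda>z. u t z) (x - \<delta>)) \<longlongrightarrow> lderiv (\<lambda>z. u t z) x) (at_right 0)"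
      unfolding Let_def using A X by simp
  qed
qed

end
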